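(* Let $\Sigma$ be a signature on standard form over a variable system with the de Bruijn property, $F:\mathcal F_\Sigma\to\mathcal C$ a cwf morphism, $\Pi$ a predicate signature on standard form over $\Sigma$, and $\mathcal D$ a first-order hyperdoctrine over $\mathcal C$. Let $G:\mathcal H_{\Sigma,\Pi,\emptyset}\to\mathcal D$ be an $F$-based hyperdoctrine morphism, and $T$ a theory over $(\Sigma,\Pi)$ such that $G_\Gamma(\Gamma,\phi)\le G_\Gamma(\Gamma,\psi)$ for every sequent $(\phi\Rightarrow_\Gamma\psi)\in T$. Then $G_\Gamma(\Gamma,\phi)\le G_\Gamma(\Gamma,\psi)$ for every $(\phi\Rightarrow_\Gamma\psi)\in\mathrm{Thm}(\Sigma,\Pi,T)$; consequently $G$ (with the same components) is an $F$-based hyperdoctrine morphism $\mathcal H_{\Sigma,\Pi,T}\to\mathcal D$, i.e. a model of $T$.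
   Context: Type system: fix an infinite set $V$ of variables with decidable equality and a fresh variable provider: functions $\varphi,\mathsf{fr}$ assigning to each finite $X\subseteq V$ an inhabited $\varphi(X)\subseteq V\setminus X$ and $\mathsf{fr}(X)\in\varphi(X)$; de Bruijn property: $\varphi(X)=\{\mathsf{fr}(X)\}$. Disjoint sets $F$ (function symbols), $T$ (type symbols). Preelements: terms from variables and $F$; pretypes $S(t_1,\ldots,t_n)$, $S\in T$. $\mathrm V(E)$: variables of $E$; $E[\bar a/\bar x]$: simultaneous substitution. Precontext $\Gamma=x_1:A_1,\ldots,x_n:A_n$ with $x_k\in\varphi(\{x_1,\ldots,x_{k-1}\})$, $\mathrm V(A_k)\subseteq\{x_1,\ldots,x_{k-1}\}$; $\mathrm{OV}(\Gamma)=x_1,\ldots,x_n$; $\mathrm{Fresh}(\Gamma)=\varphi(\mathrm V(\Gamma))$, $\mathrm{fresh}(\Gamma)=\mathsf{fr}(\mathrm V(\Gamma))$; $E[\bar a/\Gamma]=E[\bar a/x_1,\ldots,x_n]$. Top variables $\mathrm{TV}(\langle\rangle)=\emptyset$, $\mathrm{TV}(\Gamma,x:A)=(\mathrm{TV}(\Gamma)\setminus\mathrm V(A))\cup\{x\}$; a determining sequence is a strictly increasing $\bar i=i_1,\ldots,i_k$ with $\mathrm{TV}(\Gamma)\subseteq\{x_{i_1},\ldots,x_{i_k}\}$, $\bar a_{\bar i}=a_{i_1},\ldots,a_{i_k}$; a declaration is on standard form if $\bar i=1,\ldots,n$ (then $\bar i$ is omitted). Declarations $(\Gamma,S,\bar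 i)$ and $(\Gamma,f,\bar i,U)$ ($\mathrm V(U)\subseteq\mathrm V(\Gamma)$), each symbol at most once. $\mathcal J(\Sigma)$: smallest set of judgements closed under (R1) $\langle\rangle$ context; (R2) $\Gamma$ context, $A$ type $(\Gamma)$ $\Rightarrow$ $\Gamma,x:A$ context ($x\in\mathrm{Fresh}(\Gamma)$); (R3) $x_1:A_1,\ldots,x_n:A_n$ context $\Rightarrow$ $x_i:A_i\ (x_1:A_1,\ldots,x_n:A_n)$; (R4) $(\Gamma,S,\bar i)\in\Sigma$, $\bar a:\Delta\to\Gamma$ $\Rightarrow$ $S(\bar a_{\bar i})$ type $(\Delta)$; (R5) $(\Gamma,f,\bar i,U)\in\Sigma$, $\bar a:\Delta\to\Gamma$, $U[\bar a/\Gamma]$ type $(\Delta)$ $\Rightarrow$ $f(\bar a_{\bar i}):U[\bar a/\Gamma]\ (\Delta)$; where "$\bar a:\Delta\to\Gamma$" abbreviates $\Delta$ context, $\Gamma$ context, $a_k:A_k[a_1,\ldots,a_{k-1}/x_1,\ldots,x_{k-1}]\ (\Delta)$. $\Sigma$ is a signature if declared contexts are contexts and declared $U$ are types in $\mathcal J(\Sigma)$. Cwf: a category $\mathcal C$ with terminal object; classes $\mathrm{Ty}(\Gamma)$ with functorial substitution $A\{f\}$; context extension $\Gamma.A$ with $\mathrm p(A):\Gamma.A\to\Gamma$; classes $\mathrm{Tm}(\Gamma,A)$ with functorial $a\{f\}\in\mathrm{Tm}(\Delta,A\{f\})$; $\mathrm v_A\in\mathrm{Tm}(\Gamma.A,A\{\mathrm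 p(A)\})$; $\langle f,a\rangle_A:\Delta\to\Gamma.A$ for $a\in\mathrm{Tm}(\Delta,A\{f\})$ with $\mathrm p(A)\langle f,a\rangle_A=f$, $\mathrm v_A\{\langle f,a\rangle_A\}=a$, $\langle\mathrm p(A)h,\mathrm v_A\{h\}\rangle_A=h$, $\langle f,a\rangle_A g=\langle fg,a\{g\}\rangle_A$; $f.A=\langle f\circ\mathrm p(A\{f\}),\mathrm v_{A\{f\}}\rangle_A:\Delta.A\{f\}\to\Gamma.A$. A cwf morphism $(F,\sigma,\theta):\mathcal C\to\mathcal C'$: a functor $F$ preserving the terminal object, $\sigma_\Gamma:\mathrm{Ty}(\Gamma)\to\mathrm{Ty}'(F\Gamma)$ with $\sigma_\Delta(A\{f\})=\sigma_\Gamma(A)\{Ff\}$, $F(\Gamma.A)=F\Gamma.\sigma_\Gamma(A)$, $F(\mathrm p(A))=\mathrm p(\sigma_\Gamma(A))$, and $\theta_{\Gamma,A}:\mathrm{Tm}(\Gamma,A)\to\mathrm{Tm}'(F\Gamma,\sigma_\Gamma(A))$ commuting with substitution, with $\theta(\mathrm v_A)=\mathrm v_{\sigma_\Gamma(A)}$ and $F\langle f,a\rangle_A=\langle Ff,\theta(a)\rangle_{\sigma_\Gamma(A)}$. The cwf $\mathcal F_\Sigma$: objects are contexts $\Gamma$ (i.e. ($\Gamma$ context)$\in\mathcal J(\Sigma)$); morphisms $(\Delta,\Gamma,\bar a)$ with $\bar a:\Delta\to\Gamma$ in $\mathcal J(\Sigma)$, composed by substitution, identity $(\Gamma,\Gamma,\mathrm{OV}(\Gamma))$;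 $\mathrm{Ty}(\Gamma)=\{(\Gamma,A):(A\text{ type }(\Gamma))\in\mathcal J(\Sigma)\}$, $(\Gamma,A)\{(\Delta,\Gamma,\bar a)\}=(\Delta,A[\bar a/\Gamma])$; $\mathrm{Tm}(\Gamma,(\Gamma,A))=\{((\Gamma,A),a):(a:A\ (\Gamma))\in\mathcal J(\Sigma)\}$; $\Gamma.(\Gamma,S)=\langle\Gamma,\mathrm{fresh}(\Gamma):S\rangle$, $\mathrm p=(\Gamma.(\Gamma,S),\Gamma,\mathrm{OV}(\Gamma))$, $\mathrm v=((\Gamma.(\Gamma,S),S),\mathrm{fresh}(\Gamma))$, $\langle(\Delta,\Gamma,\bar s),((\Delta,S[\bar s/\Gamma]),b)\rangle=(\Delta,\Gamma.(\Gamma,S),(\bar s,b))$. Heyting (pre)algebra: a preorder $\le$ (not necessarily antisymmetric) with $\top,\bot,\wedge,\vee,\to$ satisfying $\bot\le x\le\top$, $z\le x\wedge y$ iff $z\le x$ and $z\le y$, $x\vee y\le z$ iff $x\le z$ and $y\le z$, $z\le(x\to y)$ iff $z\wedge x\le y$; morphisms are monotone maps preserving the operations and constants. A first-order hyperdoctrine over a cwf $\mathcal C$ is $(\mathcal C,\mathrm{Pr},\forall,\exists)$ with $\mathrm{Pr}:\mathcal C^{\mathrm{op}}\to\mathrm{Heyting}$ a functor ($R\{f\}=\mathrm{Pr}(f)(R)$) and, for $S\in\mathrm{Ty}(\Gamma)$, monotone $\forall_S,\exists_S:\mathrm{Pr}(\Gamma.S)\to\mathrm{Pr}(\Gamma)$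 with $Q\le\forall_S(R)$ iff $Q\{\mathrm p(S)\}\le R$, and $\exists_S(R)\le Q$ iff $R\le Q\{\mathrm p(S)\}$ ($Q\in\mathrm{Pr}(\Gamma)$, $R\in\mathrm{Pr}(\Gamma.S)$), and for $f:\Delta\to\Gamma$: $\forall_S(R)\{f\}=\forall_{S\{f\}}(R\{f.S\})$, $\exists_S(R)\{f\}=\exists_{S\{f\}}(R\{f.S\})$. Given a cwf morphism $F=(F,\sigma,\theta):\mathcal C\to\mathcal C'$ and hyperdoctrines $\mathcal H=(\mathcal C,\mathrm{Pr},\forall,\exists)$, $\mathcal H'=(\mathcal C',\mathrm{Pr}',\forall',\exists')$, an $F$-based morphism $G:\mathcal H\to\mathcal H'$ is a family of Heyting morphisms $G_\Gamma:\mathrm{Pr}(\Gamma)\to\mathrm{Pr}'(F\Gamma)$ with $G_\Delta(R\{f\})=G_\Gamma(R)\{Ff\}$ for $f:\Delta\to\Gamma$, $G_\Gamma(\forall_S R)=\forall'_{\sigma_\Gamma(S)}(G_{\Gamma.S}R)$ and $G_\Gamma(\exists_S R)=\exists'_{\sigma_\Gamma(S)}(G_{\Gamma.S}R)$. Logic: predicate symbols from a set $P$ disjoint from $F\cup T$; a predicate declaration is $(\Gamma,\bar i,R)$ with ($\Gamma$ context)$\in\mathcal J(\Sigma)$, $\bar i$ determining, $R\in P$ (written $(\Gamma,R)$ on standard form); a predicate signature $\Pi$ declares each symbol at most once. $\mathrm{Form}(\Sigma,\Pi)$ is the smallest set of judgements "$\phi$ form $(\Gamma)$" with: $R(\bar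 a_{\bar i})$ form $(\Delta)$ for $(\Gamma,\bar i,R)\in\Pi$ and $\bar a:\Delta\to\Gamma$ in $\mathcal J(\Sigma)$; $\bot,\top$ form $(\Gamma)$ for contexts $\Gamma$; $(\phi\circ\psi)$ form $(\Gamma)$ for $\circ\in\{\wedge,\vee,\to\}$ from $\phi,\psi$ form $(\Gamma)$; $(Qx:A)\phi$ form $(\Gamma)$ for $Q\in\{\forall,\exists\}$ from $\phi$ form $(\Gamma,x:A)$ (with $(A\text{ type }(\Gamma))\in\mathcal J(\Sigma)$). Capture-avoiding substitution for $\bar a:\Delta\to\Gamma$: $\phi\{(\Delta,\Gamma,\bar a)\}=\phi[\bar a/\Gamma]$ for atomic $\phi$; it commutes with $\top,\bot,\wedge,\vee,\to$; and $((Qx:A)\theta)\{(\Delta,\Gamma,\bar a)\}=(Qy:A[\bar a/\Gamma])\,\theta\{(\langle\Delta,y:A[\bar a/\Gamma]\rangle,\langle\Gamma,x:A\rangle,(\bar a,y))\}$ with $y=\mathrm{fresh}(\Delta)$. A sequent is $\phi\Rightarrow_\Gamma\psi$ with $\phi,\psi$ form $(\Gamma)$; a theory is a set of sequents. Write $\mathbf p_\Gamma(x:A)=(\langle\Gamma,x:A\rangle,\Gamma,\mathrm{OV}(\Gamma))$. $\mathrm{Thm}(\Sigma,\Pi,T)$ is the smallest set of sequents containing $T$ and closed under: $\phi\Rightarrow_\Gamma\phi$; cut; $\theta\wedge\psi\Rightarrow_\Gamma\theta$, $\theta\wedge\psi\Rightarrow_\Gamma\psi$, from $\phi\Rightarrow_\Gamma\theta$,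 $\phi\Rightarrow_\Gamma\psi$ infer $\phi\Rightarrow_\Gamma\theta\wedge\psi$, $\phi\Rightarrow_\Gamma\top$; $\theta\Rightarrow_\Gamma\theta\vee\psi$, $\psi\Rightarrow_\Gamma\theta\vee\psi$, from $\theta\Rightarrow_\Gamma\phi$, $\psi\Rightarrow_\Gamma\phi$ infer $\theta\vee\psi\Rightarrow_\Gamma\phi$, $\bot\Rightarrow_\Gamma\phi$; $\theta\wedge\psi\Rightarrow_\Gamma\phi$ iff $\theta\Rightarrow_\Gamma\psi\to\phi$; $\phi\{\mathbf p_\Gamma(x:A)\}\Rightarrow_{\Gamma,x:A}\psi$ iff $\phi\Rightarrow_\Gamma(\forall x:A)\psi$; $\psi\Rightarrow_{\Gamma,x:A}\phi\{\mathbf p_\Gamma(x:A)\}$ iff $(\exists x:A)\psi\Rightarrow_\Gamma\phi$ (each "iff" read as two rules); and substitution: from $\phi\Rightarrow_\Gamma\psi$ and $\bar a:\Delta\to\Gamma$ infer $\phi\{(\Delta,\Gamma,\bar a)\}\Rightarrow_\Delta\psi\{(\Delta,\Gamma,\bar a)\}$. Lindenbaum–Tarski hyperdoctrine $\mathcal H_{\Sigma,\Pi,T}=(\mathcal F_\Sigma,\mathrm{Pr}_{\Sigma,\Pi,T},\forall,\exists)$: $\mathrm{Pr}_{\Sigma,\Pi,T}(\Gamma)=\{(\Gamma,\phi):(\phi\text{ form }(\Gamma))\in\mathrm{Form}(\Sigma,\Pi)\}$ ordered by $(\Gamma,\phi)\le(\Gamma,\psi)$ iff $(\phi\Rightarrow_\Gamma\psi)\in\mathrm{Thm}(\Sigma,\Pi,T)$,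 Heyting operations given by the connectives; $\mathrm{Pr}((\Delta,\Gamma,\bar a))(\Gamma,\phi)=(\Delta,\phi\{(\Delta,\Gamma,\bar a)\})$; $\forall_{(\Gamma,A)}(\langle\Gamma,x:A\rangle,\psi)=(\Gamma,(\forall x:A)\psi)$, $\exists_{(\Gamma,A)}(\langle\Gamma,x:A\rangle,\psi)=(\Gamma,(\exists x:A)\psi)$. $\mathcal H_{\Sigma,\Pi,\emptyset}$ is the case $T=\emptyset$; its underlying sets $\mathrm{Pr}(\Gamma)$ coincide with those of $\mathcal H_{\Sigma,\Pi,T}$. *)

theory Defs
  imports Main
begin

section \<open>Syntax: preelements, pretypes, precontexts\<close>

datatype ('v,'f) ptm = Var 'v | App 'f "('v,'f) ptm list"

datatype ('v,'f,'s) pty = TyApp 's "('v,'f) ptm list"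

type_synonym ('v,'f,'s) ctx = "('v \<times> ('v,'f,'s) pty) list"

primrec vars_tm :: "('v,'f) ptm \<Rightarrow> 'v set" where
  "vars_tm (Var v) = {v}"
| "vars_tm (App f ts) = \<Union> (set (map vars_tm ts))"

primrec vars_ty :: "('v,'f,'s) pty \<Rightarrow> 'v set" where
  "vars_ty (TyApp S ts) = \<Union> (set (map vars_tm ts))"

definition vars_ctx :: "('v,'f,'s) ctx \<Rightarrow> 'v set" where
  "vars_ctx G = set (map fst G) \<union> \<Union> (vars_ty ` snd ` set G)"

definition ovars :: "('v,'f,'s) ctx \<Rightarrow> 'v list" where
  "ovars G = map fst G"

definition sub_of :: "'v list \<Rightarrow> ('v,'f) ptm list \<Rightarrow> 'v \<Rightarrow> ('v,'f) ptm" where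
  "sub_of xs as = (\<lambda>v. case map_of (zip xs as) v of None \<Rightarrow> Var v | Some t \<Rightarrow> t)"

primrec subst_tm :: "('v \<Rightarrow> ('v,'f) ptm) \<Rightarrow> ('v,'f) ptm \<Rightarrow> ('v,'f) ptm" where
  "subst_tm s (Var v) = s v"
| "subst_tm s (App f ts) = App f (map (subst_tm s) ts)"

primrec subst_ty :: "('v \<Rightarrow> ('v,'f) ptm) \<Rightarrow> ('v,'f,'s) pty \<Rightarrow> ('v,'f,'s) pty" where
  "subst_ty s (TyApp S ts) = TyApp S (map (subst_tm s) ts)"

text \<open>Top variables and determining sequences (indices are 0-based here).\<close>
definition TV :: "('v,'f,'s) ctx \<Rightarrow> 'v set" where
  "TV G = foldl (\<lambda>S (x,A). (S - vars_ty A) \<union> {x}) {} G"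

definition determining :: "('v,'f,'s) ctx \<Rightarrow> nat list \<Rightarrow> bool" where
  "determining G is \<longleftrightarrow> sorted_wrt (<) is \<and> (\<forall>i\<in>set is. i < length G)
     \<and> TV G \<subseteq> {fst (G ! i) |i. i \<in> set is}"

definition var_system :: "('v set \<Rightarrow> 'v set) \<Rightarrow> ('v set \<Rightarrow> 'v) \<Rightarrow> bool" where
  "var_system phi fr \<longleftrightarrow> infinite (UNIV :: 'v set) \<and>
     (\<forall>X. finite X \<longrightarrow> phi X \<noteq> {} \<and> phi X \<inter> X = {} \<and> fr X \<in> phi X)"

definition de_bruijn :: "('v set \<Rightarrow> 'v set) \<Rightarrow> ('v set \<Rightarrow> 'v) \<Rightarrow> bool" where
  "de_bruijn phi fr \<longleftrightarrow> (\<forall>X. finite X \<longrightarrow> phi X = {fr X})"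

definition fresh :: "('v set \<Rightarrow> 'v) \<Rightarrow> ('v,'f,'s) ctx \<Rightarrow> 'v" where
  "fresh fr G = fr (vars_ctx G)"

datatype ('v,'f,'s) decl =
    TyDecl "('v,'f,'s) ctx" 's "nat list"
  | FnDecl "('v,'f,'s) ctx" 'f "nat list" "('v,'f,'s) pty"

datatype ('v,'f,'s) jdg =
    CtxJ "('v,'f,'s) ctx"
  | TypeJ "('v,'f,'s) pty" "('v,'f,'s) ctx"
  | ElemJ "('v,'f) ptm" "('v,'f,'s) pty" "('v,'f,'s) ctx"

text \<open>\<open>a : Delta \<rightarrow> Gamma\<close> relative to a set of judgements.\<close>
definition mor_judg :: "('v,'f,'s) jdg set \<Rightarrow> ('v,'f,'s) ctx \<Rightarrow> ('v,'f,'s) ctx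
    \<Rightarrow> ('v,'f) ptm list \<Rightarrow> bool" where
  "mor_judg J D G as \<longleftrightarrow> CtxJ D \<in> J \<and> CtxJ G \<in> J \<and> length as = length G \<and>
     (\<forall>k<length G. ElemJ (as ! k)
        (subst_ty (sub_of (take k (ovars G)) (take k as)) (snd (G ! k))) D \<in> J)"

lemma mor_judg_mono: "A \<subseteq> B \<Longrightarrow> mor_judg A D G as \<longrightarrow> mor_judg B D G as"
  unfolding mor_judg_def by blast

inductive_set judg :: "('v set \<Rightarrow> 'v set) \<Rightarrow> ('v,'f,'s) decl set \<Rightarrow> ('v,'f,'s) jdg set"
  for phi :: "'v set \<Rightarrow> 'v set" and Sig :: "('v,'f,'s) decl set" where
  R1: "CtxJ [] \<in> judg phi Sig"
| R2: "\<lbrakk> CtxJ G \<in> judg phi Sig; TypeJ A G \<in> judg phi Sig; x \<in> phi (vars_ctx G) \<rbrakk>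
       \<Longrightarrow> CtxJ (G @ [(x,A)]) \<in> judg phi Sig"
| R3: "\<lbrakk> CtxJ G \<in> judg phi Sig; i < length G \<rbrakk>
       \<Longrightarrow> ElemJ (Var (fst (G ! i))) (snd (G ! i)) G \<in> judg phi Sig"
| R4: "\<lbrakk> TyDecl G S is \<in> Sig; mor_judg (judg phi Sig) D G as \<rbrakk>
       \<Longrightarrow> TypeJ (TyApp S (map ((!) as) is)) D \<in> judg phi Sig"
| R5: "\<lbrakk> FnDecl G f is U \<in> Sig; mor_judg (judg phi Sig) D G as;
         TypeJ (subst_ty (sub_of (ovars G) as) U) D \<in> judg phi Sig \<rbrakk>
       \<Longrightarrow> ElemJ (App f (map ((!) as) is)) (subst_ty (sub_of (ovars G) as) U) D \<in> judg phi Sig"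
monos mor_judg_mono

definition signature :: "('v set \<Rightarrow> 'v set) \<Rightarrow> ('v,'f,'s) decl set \<Rightarrow> bool" where
  "signature phi Sig \<longleftrightarrow>
     (\<forall>G S is. TyDecl G S is \<in> Sig \<longrightarrow> CtxJ G \<in> judg phi Sig \<and> determining G is) \<and>
     (\<forall>G f is U. FnDecl G f is U \<in> Sig \<longrightarrow> CtxJ G \<in> judg phi Sig \<and> determining G is
         \<and> vars_ty U \<subseteq> vars_ctx G \<and> TypeJ U G \<in> judg phi Sig) \<and>
     (\<forall>G1 is1 G2 is2 S. TyDecl G1 S is1 \<in> Sig \<longrightarrow> TyDecl G2 S is2 \<in> Sig \<longrightarrow> G1 = G2 \<and> is1 = is2) \<and>
     (\<forall>G1 is1 U1 G2 is2 U2 f. FnDecl G1 f is1 U1 \<in> Sig \<longrightarrow> FnDecl G2 f is2 U2 \<in> Sig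
         \<longrightarrow> G1 = G2 \<and> is1 = is2 \<and> U1 = U2)"

definition sig_standard :: "('v,'f,'s) decl set \<Rightarrow> bool" where
  "sig_standard Sig \<longleftrightarrow>
     (\<forall>G S is. TyDecl G S is \<in> Sig \<longrightarrow> is = [0..<length G]) \<and>
     (\<forall>G f is U. FnDecl G f is U \<in> Sig \<longrightarrow> is = [0..<length G])"

record ('o,'m,'ty,'tm) cwf =
  cw_obj :: "'o set"
  cw_hom :: "'o \<Rightarrow> 'o \<Rightarrow> 'm set"
  cw_comp :: "'m \<Rightarrow> 'm \<Rightarrow> 'm"   (* cw_comp g f = g o f *)
  cw_id :: "'o \<Rightarrow> 'm"
  cw_Ty :: "'o \<Rightarrow> 'ty set"
  cw_tysub :: "'ty \<Rightarrow> 'm \<Rightarrow> 'ty"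
  cw_Tm :: "'o \<Rightarrow> 'ty \<Rightarrow> 'tm set"
  cw_tmsub :: "'tm \<Rightarrow> 'm \<Rightarrow> 'tm"
  cw_ext :: "'o \<Rightarrow> 'ty \<Rightarrow> 'o"
  cw_p :: "'o \<Rightarrow> 'ty \<Rightarrow> 'm"
  cw_v :: "'o \<Rightarrow> 'ty \<Rightarrow> 'tm"
  cw_pair :: "'o \<Rightarrow> 'ty \<Rightarrow> 'm \<Rightarrow> 'tm \<Rightarrow> 'm"

definition is_terminal :: "('o,'m,'ty,'tm) cwf \<Rightarrow> 'o \<Rightarrow> bool" where
  "is_terminal C t \<longleftrightarrow> t \<in> cw_obj C \<and> (\<forall>G\<in>cw_obj C. \<exists>!f. f \<in> cw_hom C G t)"

definition cwf :: "('o,'m,'ty,'tm) cwf \<Rightarrow> bool" where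
  "cwf C \<longleftrightarrow>
    \<comment> \<open>category\<close>
    (\<forall>G\<in>cw_obj C. cw_id C G \<in> cw_hom C G G) \<and>
    (\<forall>A\<in>cw_obj C. \<forall>B\<in>cw_obj C. \<forall>E\<in>cw_obj C. \<forall>f\<in>cw_hom C A B. \<forall>g\<in>cw_hom C B E.
        cw_comp C g f \<in> cw_hom C A E) \<and>
    (\<forall>A\<in>cw_obj C. \<forall>B\<in>cw_obj C. \<forall>f\<in>cw_hom C A B.
        cw_comp C (cw_id C B) f = f \<and> cw_comp C f (cw_id C A) = f) \<and>
    (\<forall>A\<in>cw_obj C. \<forall>B\<in>cw_obj C. \<forall>E\<in>cw_obj C. \<forall>H\<in>cw_obj C.
       \<forall>f\<in>cw_hom C A B. \<forall>g\<in>cw_hom C B E. \<forall>h\<in>cw_hom C E H.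
        cw_comp C h (cw_comp C g f) = cw_comp C (cw_comp C h g) f) \<and>
    (\<exists>t. is_terminal C t) \<and>
    \<comment> \<open>types\<close>
    (\<forall>G\<in>cw_obj C. \<forall>D\<in>cw_obj C. \<forall>A\<in>cw_Ty C G. \<forall>f\<in>cw_hom C D G.
        cw_tysub C A f \<in> cw_Ty C D) \<and>
    (\<forall>G\<in>cw_obj C. \<forall>A\<in>cw_Ty C G. cw_tysub C A (cw_id C G) = A) \<and>
    (\<forall>G\<in>cw_obj C. \<forall>D\<in>cw_obj C. \<forall>E\<in>cw_obj C. \<forall>A\<in>cw_Ty C G.
       \<forall>f\<in>cw_hom C D G. \<forall>g\<in>cw_hom C E D.
        cw_tysub C A (cw_comp C f g) = cw_tysub C (cw_tysub C A f) g) \<and>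
    \<comment> \<open>terms\<close>
    (\<forall>G\<in>cw_obj C. \<forall>D\<in>cw_obj C. \<forall>A\<in>cw_Ty C G. \<forall>a\<in>cw_Tm C G A. \<forall>f\<in>cw_hom C D G.
        cw_tmsub C a f \<in> cw_Tm C D (cw_tysub C A f)) \<and>
    (\<forall>G\<in>cw_obj C. \<forall>A\<in>cw_Ty C G. \<forall>a\<in>cw_Tm C G A. cw_tmsub C a (cw_id C G) = a) \<and>
    (\<forall>G\<in>cw_obj C. \<forall>D\<in>cw_obj C. \<forall>E\<in>cw_obj C. \<forall>A\<in>cw_Ty C G. \<forall>a\<in>cw_Tm C G A.
       \<forall>f\<in>cw_hom C D G. \<forall>g\<in>cw_hom C E D.
        cw_tmsub C a (cw_comp C f g) = cw_tmsub C (cw_tmsub C a f) g) \<and>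
    \<comment> \<open>context comprehension\<close>
    (\<forall>G\<in>cw_obj C. \<forall>A\<in>cw_Ty C G.
        cw_ext C G A \<in> cw_obj C \<and> cw_p C G A \<in> cw_hom C (cw_ext C G A) G \<and>
        cw_v C G A \<in> cw_Tm C (cw_ext C G A) (cw_tysub C A (cw_p C G A))) \<and>
    (\<forall>G\<in>cw_obj C. \<forall>D\<in>cw_obj C. \<forall>A\<in>cw_Ty C G. \<forall>f\<in>cw_hom C D G.
       \<forall>a\<in>cw_Tm C D (cw_tysub C A f).
        cw_pair C G A f a \<in> cw_hom C D (cw_ext C G A) \<and>
        cw_comp C (cw_p C G A) (cw_pair C G A f a) = f \<and>
        cw_tmsub C (cw_v C G A) (cw_pair C G A f a) = a \<and>
        (\<forall>E\<in>cw_obj C. \<forall>g\<in>cw_hom C E D.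
           cw_comp C (cw_pair C G A f a) g
             = cw_pair C G A (cw_comp C f g) (cw_tmsub C a g))) \<and>
    (\<forall>G\<in>cw_obj C. \<forall>D\<in>cw_obj C. \<forall>A\<in>cw_Ty C G. \<forall>h\<in>cw_hom C D (cw_ext C G A).
        cw_pair C G A (cw_comp C (cw_p C G A) h) (cw_tmsub C (cw_v C G A) h) = h)"

definition cw_dot :: "('o,'m,'ty,'tm) cwf \<Rightarrow> 'o \<Rightarrow> 'o \<Rightarrow> 'm \<Rightarrow> 'ty \<Rightarrow> 'm" where
  "cw_dot C D G f A = cw_pair C G A
      (cw_comp C f (cw_p C D (cw_tysub C A f))) (cw_v C D (cw_tysub C A f))"

definition cwf_morphism ::
  "('o,'m,'ty,'tm) cwf \<Rightarrow> ('o2,'m2,'ty2,'tm2) cwf \<Rightarrow> ('o \<Rightarrow> 'o2) \<Rightarrow> ('m \<Rightarrow> 'm2)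
   \<Rightarrow> ('o \<Rightarrow> 'ty \<Rightarrow> 'ty2) \<Rightarrow> ('o \<Rightarrow> 'ty \<Rightarrow> 'tm \<Rightarrow> 'tm2) \<Rightarrow> bool" where
  "cwf_morphism C C' Fo Fm sg th \<longleftrightarrow>
    \<comment> \<open>functor\<close>
    (\<forall>G\<in>cw_obj C. Fo G \<in> cw_obj C') \<and>
    (\<forall>G\<in>cw_obj C. \<forall>D\<in>cw_obj C. \<forall>f\<in>cw_hom C D G. Fm f \<in> cw_hom C' (Fo D) (Fo G)) \<and>
    (\<forall>G\<in>cw_obj C. Fm (cw_id C G) = cw_id C' (Fo G)) \<and>
    (\<forall>A\<in>cw_obj C. \<forall>B\<in>cw_obj C. \<forall>E\<in>cw_obj C. \<forall>f\<in>cw_hom C A B. \<forall>g\<in>cw_hom C B E.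
        Fm (cw_comp C g f) = cw_comp C' (Fm g) (Fm f)) \<and>
    \<comment> \<open>preserves the terminal object\<close>
    (\<forall>t. is_terminal C t \<longrightarrow> is_terminal C' (Fo t)) \<and>
    \<comment> \<open>types\<close>
    (\<forall>G\<in>cw_obj C. \<forall>A\<in>cw_Ty C G. sg G A \<in> cw_Ty C' (Fo G)) \<and>
    (\<forall>G\<in>cw_obj C. \<forall>D\<in>cw_obj C. \<forall>A\<in>cw_Ty C G. \<forall>f\<in>cw_hom C D G.
        sg D (cw_tysub C A f) = cw_tysub C' (sg G A) (Fm f)) \<and>
    (\<forall>G\<in>cw_obj C. \<forall>A\<in>cw_Ty C G.
        Fo (cw_ext C G A) = cw_ext C' (Fo G) (sg G A) \<and>
        Fm (cw_p C G A) = cw_p C' (Fo G) (sg G A)) \<and>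
    \<comment> \<open>terms\<close>
    (\<forall>G\<in>cw_obj C. \<forall>A\<in>cw_Ty C G. \<forall>a\<in>cw_Tm C G A. th G A a \<in> cw_Tm C' (Fo G) (sg G A)) \<and>
    (\<forall>G\<in>cw_obj C. \<forall>D\<in>cw_obj C. \<forall>A\<in>cw_Ty C G. \<forall>a\<in>cw_Tm C G A. \<forall>f\<in>cw_hom C D G.
        th D (cw_tysub C A f) (cw_tmsub C a f) = cw_tmsub C' (th G A a) (Fm f)) \<and>
    (\<forall>G\<in>cw_obj C. \<forall>A\<in>cw_Ty C G.
        th (cw_ext C G A) (cw_tysub C A (cw_p C G A)) (cw_v C G A) = cw_v C' (Fo G) (sg G A)) \<and>
    (\<forall>G\<in>cw_obj C. \<forall>D\<in>cw_obj C. \<forall>A\<in>cw_Ty C G. \<forall>f\<in>cw_hom C D G.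
       \<forall>a\<in>cw_Tm C D (cw_tysub C A f).
        Fm (cw_pair C G A f a)
          = cw_pair C' (Fo G) (sg G A) (Fm f) (th D (cw_tysub C A f) a))"

section \<open>The term model cwf \<open>F_Sigma\<close>\<close>

type_synonym ('v,'f,'s) smor = "('v,'f,'s) ctx \<times> ('v,'f,'s) ctx \<times> ('v,'f) ptm list"
type_synonym ('v,'f,'s) sty = "('v,'f,'s) ctx \<times> ('v,'f,'s) pty"
type_synonym ('v,'f,'s) stm = "('v,'f,'s) sty \<times> ('v,'f) ptm"

definition FSig :: "('v set \<Rightarrow> 'v set) \<Rightarrow> ('v set \<Rightarrow> 'v) \<Rightarrow> ('v,'f,'s) decl set \<Rightarrow>
   (('v,'f,'s) ctx, ('v,'f,'s) smor, ('v,'f,'s) sty, ('v,'f,'s) stm) cwf" where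
  "FSig phi fr Sig = \<lparr>
     cw_obj = {G. CtxJ G \<in> judg phi Sig},
     cw_hom = (\<lambda>D G. {(D, G, as) |as. mor_judg (judg phi Sig) D G as}),
     cw_comp = (\<lambda>(D', G, as) (E, D, bs). (E, G, map (subst_tm (sub_of (ovars D) bs)) as)),
     cw_id = (\<lambda>G. (G, G, map Var (ovars G))),
     cw_Ty = (\<lambda>G. {(G, A) |A. TypeJ A G \<in> judg phi Sig}),
     cw_tysub = (\<lambda>(G', A) (D, G, as). (D, subst_ty (sub_of (ovars G) as) A)),
     cw_Tm = (\<lambda>G X. {(X, a) |a. fst X = G \<and> ElemJ a (snd X) G \<in> judg phi Sig}),
     cw_tmsub = (\<lambda>((G', A), a) (D, G, as).
        ((D, subst_ty (sub_of (ovars G) as) A), subst_tm (sub_of (ovars G) as) a)),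
     cw_ext = (\<lambda>G X. G @ [(fresh fr G, snd X)]),
     cw_p = (\<lambda>G X. (G @ [(fresh fr G, snd X)], G, map Var (ovars G))),
     cw_v = (\<lambda>G X. ((G @ [(fresh fr G, snd X)], snd X), Var (fresh fr G))),
     cw_pair = (\<lambda>G X (D, G', ss) (Y, b). (D, G @ [(fresh fr G, snd X)], ss @ [b])) \<rparr>"

record 'a heyting =
  hcar :: "'a set"
  hle :: "'a \<Rightarrow> 'a \<Rightarrow> bool"
  htop :: 'a
  hbot :: 'a
  hmeet :: "'a \<Rightarrow> 'a \<Rightarrow> 'a"
  hjoin :: "'a \<Rightarrow> 'a \<Rightarrow> 'a"
  himp :: "'a \<Rightarrow> 'a \<Rightarrow> 'a"

definition heyting_prealg :: "'a heyting \<Rightarrow> bool" where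
  "heyting_prealg H \<longleftrightarrow>
    (\<forall>x\<in>hcar H. hle H x x) \<and>
    (\<forall>x\<in>hcar H. \<forall>y\<in>hcar H. \<forall>z\<in>hcar H. hle H x y \<longrightarrow> hle H y z \<longrightarrow> hle H x z) \<and>
    htop H \<in> hcar H \<and> hbot H \<in> hcar H \<and>
    (\<forall>x\<in>hcar H. \<forall>y\<in>hcar H. hmeet H x y \<in> hcar H \<and> hjoin H x y \<in> hcar H \<and> himp H x y \<in> hcar H) \<and>
    (\<forall>x\<in>hcar H. hle H (hbot H) x \<and> hle H x (htop H)) \<and>
    (\<forall>x\<in>hcar H. \<forall>y\<in>hcar H. \<forall>z\<in>hcar H.
        (hle H z (hmeet H x y) \<longleftrightarrow> hle H z x \<and> hle H z y) \<and>
        (hle H (hjoin H x y) z \<longleftrightarrow> hle H x z \<and> hle H y z) \<and>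
        (hle H z (himp H x y) \<longleftrightarrow> hle H (hmeet H z x) y))"

definition heyting_hom :: "'a heyting \<Rightarrow> 'b heyting \<Rightarrow> ('a \<Rightarrow> 'b) \<Rightarrow> bool" where
  "heyting_hom H H' h \<longleftrightarrow>
    (\<forall>x\<in>hcar H. h x \<in> hcar H') \<and>
    (\<forall>x\<in>hcar H. \<forall>y\<in>hcar H. hle H x y \<longrightarrow> hle H' (h x) (h y)) \<and>
    h (htop H) = htop H' \<and> h (hbot H) = hbot H' \<and>
    (\<forall>x\<in>hcar H. \<forall>y\<in>hcar H.
        h (hmeet H x y) = hmeet H' (h x) (h y) \<and>
        h (hjoin H x y) = hjoin H' (h x) (h y) \<and>
        h (himp H x y) = himp H' (h x) (h y))"

record ('o,'m,'ty,'a) hyperdoc =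
  hd_Pr :: "'o \<Rightarrow> 'a heyting"
  hd_sub :: "'a \<Rightarrow> 'm \<Rightarrow> 'a"
  hd_all :: "'o \<Rightarrow> 'ty \<Rightarrow> 'a \<Rightarrow> 'a"
  hd_ex :: "'o \<Rightarrow> 'ty \<Rightarrow> 'a \<Rightarrow> 'a"

definition hyperdoctrine :: "('o,'m,'ty,'tm) cwf \<Rightarrow> ('o,'m,'ty,'a) hyperdoc \<Rightarrow> bool" where
  "hyperdoctrine C H \<longleftrightarrow>
    (\<forall>G\<in>cw_obj C. heyting_prealg (hd_Pr H G)) \<and>
    (\<forall>G\<in>cw_obj C. \<forall>D\<in>cw_obj C. \<forall>f\<in>cw_hom C D G.
        heyting_hom (hd_Pr H G) (hd_Pr H D) (\<lambda>R. hd_sub H R f)) \<and>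
    (\<forall>G\<in>cw_obj C. \<forall>R\<in>hcar (hd_Pr H G). hd_sub H R (cw_id C G) = R) \<and>
    (\<forall>G\<in>cw_obj C. \<forall>D\<in>cw_obj C. \<forall>E\<in>cw_obj C. \<forall>f\<in>cw_hom C D G. \<forall>g\<in>cw_hom C E D.
       \<forall>R\<in>hcar (hd_Pr H G). hd_sub H R (cw_comp C f g) = hd_sub H (hd_sub H R f) g) \<and>
    (\<forall>G\<in>cw_obj C. \<forall>S\<in>cw_Ty C G.
       (\<forall>R\<in>hcar (hd_Pr H (cw_ext C G S)).
           hd_all H G S R \<in> hcar (hd_Pr H G) \<and> hd_ex H G S R \<in> hcar (hd_Pr H G)) \<and>
       (\<forall>R\<in>hcar (hd_Pr H (cw_ext C G S)). \<forall>R'\<in>hcar (hd_Pr H (cw_ext C G S)).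
           hle (hd_Pr H (cw_ext C G S)) R R' \<longrightarrow>
             hle (hd_Pr H G) (hd_all H G S R) (hd_all H G S R') \<and>
             hle (hd_Pr H G) (hd_ex H G S R) (hd_ex H G S R')) \<and>
       (\<forall>Q\<in>hcar (hd_Pr H G). \<forall>R\<in>hcar (hd_Pr H (cw_ext C G S)).
           (hle (hd_Pr H G) Q (hd_all H G S R) \<longleftrightarrow>
              hle (hd_Pr H (cw_ext C G S)) (hd_sub H Q (cw_p C G S)) R) \<and>
           (hle (hd_Pr H G) (hd_ex H G S R) Q \<longleftrightarrow>
              hle (hd_Pr H (cw_ext C G S)) R (hd_sub H Q (cw_p C G S)))) \<and>
       (\<forall>D\<in>cw_obj C. \<forall>f\<in>cw_hom C D G. \<forall>R\<in>hcar (hd_Pr H (cw_ext C G S)).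
           hd_sub H (hd_all H G S R) f
             = hd_all H D (cw_tysub C S f) (hd_sub H R (cw_dot C D G f S)) \<and>
           hd_sub H (hd_ex H G S R) f
             = hd_ex H D (cw_tysub C S f) (hd_sub H R (cw_dot C D G f S))))"

text \<open>\<open>F\<close>-based hyperdoctrine morphism (the source and target hyperdoctrines and the cwf
  morphism \<open>F = (Fo,Fm,sg,th)\<close> are given separately).\<close>
definition hd_morphism ::
  "('o,'m,'ty,'tm) cwf \<Rightarrow> ('o2,'m2,'ty2,'tm2) cwf \<Rightarrow> ('o \<Rightarrow> 'o2) \<Rightarrow> ('m \<Rightarrow> 'm2)
   \<Rightarrow> ('o \<Rightarrow> 'ty \<Rightarrow> 'ty2) \<Rightarrow> ('o,'m,'ty,'a) hyperdoc \<Rightarrow> ('o2,'m2,'ty2,'b) hyperdoc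
   \<Rightarrow> ('o \<Rightarrow> 'a \<Rightarrow> 'b) \<Rightarrow> bool" where
  "hd_morphism C C' Fo Fm sg H H' G \<longleftrightarrow>
    (\<forall>X\<in>cw_obj C. heyting_hom (hd_Pr H X) (hd_Pr H' (Fo X)) (G X)) \<and>
    (\<forall>X\<in>cw_obj C. \<forall>D\<in>cw_obj C. \<forall>f\<in>cw_hom C D X. \<forall>R\<in>hcar (hd_Pr H X).
        G D (hd_sub H R f) = hd_sub H' (G X R) (Fm f)) \<and>
    (\<forall>X\<in>cw_obj C. \<forall>S\<in>cw_Ty C X. \<forall>R\<in>hcar (hd_Pr H (cw_ext C X S)).
        G X (hd_all H X S R) = hd_all H' (Fo X) (sg X S) (G (cw_ext C X S) R) \<and>
        G X (hd_ex H X S R) = hd_ex H' (Fo X) (sg X S) (G (cw_ext C X S) R))"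

section \<open>Formulas, theories, and the Lindenbaum--Tarski hyperdoctrine\<close>

type_synonym ('v,'f,'s,'r) pdecl = "('v,'f,'s) ctx \<times> nat list \<times> 'r"

definition pred_signature :: "('v set \<Rightarrow> 'v set) \<Rightarrow> ('v,'f,'s) decl set
    \<Rightarrow> ('v,'f,'s,'r) pdecl set \<Rightarrow> bool" where
  "pred_signature phi Sig Pi \<longleftrightarrow>
     (\<forall>(G, is, R)\<in>Pi. CtxJ G \<in> judg phi Sig \<and> determining G is) \<and>
     (\<forall>G1 is1 G2 is2 R. (G1, is1, R) \<in> Pi \<longrightarrow> (G2, is2, R) \<in> Pi \<longrightarrow> G1 = G2 \<and> is1 = is2)"

definition pred_standard :: "('v,'f,'s,'r) pdecl set \<Rightarrow> bool" where
  "pred_standard Pi \<longleftrightarrow> (\<forall>(G, is, R)\<in>Pi. is = [0..<length G])"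

datatype ('v,'f,'s,'r) form =
    Atom 'r "('v,'f) ptm list"
  | FBot | FTop
  | FAnd "('v,'f,'s,'r) form" "('v,'f,'s,'r) form"
  | FOr "('v,'f,'s,'r) form" "('v,'f,'s,'r) form"
  | FImp "('v,'f,'s,'r) form" "('v,'f,'s,'r) form"
  | FAll 'v "('v,'f,'s) pty" "('v,'f,'s,'r) form"
  | FEx 'v "('v,'f,'s) pty" "('v,'f,'s,'r) form"

inductive_set forms :: "('v set \<Rightarrow> 'v set) \<Rightarrow> ('v,'f,'s) decl set \<Rightarrow> ('v,'f,'s,'r) pdecl set
    \<Rightarrow> (('v,'f,'s,'r) form \<times> ('v,'f,'s) ctx) set"
  for phi Sig Pi where
  atom: "\<lbrakk> (G, is, R) \<in> Pi; mor_judg (judg phi Sig) D G as \<rbrakk>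
         \<Longrightarrow> (Atom R (map ((!) as) is), D) \<in> forms phi Sig Pi"
| bot: "CtxJ G \<in> judg phi Sig \<Longrightarrow> (FBot, G) \<in> forms phi Sig Pi"
| top: "CtxJ G \<in> judg phi Sig \<Longrightarrow> (FTop, G) \<in> forms phi Sig Pi"
| conj: "\<lbrakk> (a, G) \<in> forms phi Sig Pi; (b, G) \<in> forms phi Sig Pi \<rbrakk> \<Longrightarrow> (FAnd a b, G) \<in> forms phi Sig Pi"
| disj: "\<lbrakk> (a, G) \<in> forms phi Sig Pi; (b, G) \<in> forms phi Sig Pi \<rbrakk> \<Longrightarrow> (FOr a b, G) \<in> forms phi Sig Pi"
| imp: "\<lbrakk> (a, G) \<in> forms phi Sig Pi; (b, G) \<in> forms phi Sig Pi \<rbrakk> \<Longrightarrow> (FImp a b, G) \<in> forms phi Sig Pi"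
| all: "\<lbrakk> (a, G @ [(x, A)]) \<in> forms phi Sig Pi; TypeJ A G \<in> judg phi Sig \<rbrakk>
        \<Longrightarrow> (FAll x A a, G) \<in> forms phi Sig Pi"
| ex: "\<lbrakk> (a, G @ [(x, A)]) \<in> forms phi Sig Pi; TypeJ A G \<in> judg phi Sig \<rbrakk>
        \<Longrightarrow> (FEx x A a, G) \<in> forms phi Sig Pi"

primrec fsub :: "('v set \<Rightarrow> 'v) \<Rightarrow> ('v,'f,'s,'r) form \<Rightarrow> ('v,'f,'s) ctx \<Rightarrow> ('v,'f,'s) ctx
    \<Rightarrow> ('v,'f) ptm list \<Rightarrow> ('v,'f,'s,'r) form" where
  "fsub fr (Atom R ts) D G as = Atom R (map (subst_tm (sub_of (ovars G) as)) ts)"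
| "fsub fr FBot D G as = FBot"
| "fsub fr FTop D G as = FTop"
| "fsub fr (FAnd a b) D G as = FAnd (fsub fr a D G as) (fsub fr b D G as)"
| "fsub fr (FOr a b) D G as = FOr (fsub fr a D G as) (fsub fr b D G as)"
| "fsub fr (FImp a b) D G as = FImp (fsub fr a D G as) (fsub fr b D G as)"
| "fsub fr (FAll x A a) D G as =
     (let A' = subst_ty (sub_of (ovars G) as) A; y = fresh fr D
      in FAll y A' (fsub fr a (D @ [(y, A')]) (G @ [(x, A)]) (as @ [Var y])))"
| "fsub fr (FEx x A a) D G as =
     (let A' = subst_ty (sub_of (ovars G) as) A; y = fresh fr D
      in FEx y A' (fsub fr a (D @ [(y, A')]) (G @ [(x, A)]) (as @ [Var y])))"

definition fweak :: "('v set \<Rightarrow> 'v) \<Rightarrow> ('v,'f,'s,'r) form \<Rightarrow> ('v,'f,'s) ctx \<Rightarrow> 'v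
    \<Rightarrow> ('v,'f,'s) pty \<Rightarrow> ('v,'f,'s,'r) form" where
  "fweak fr a G x A = fsub fr a (G @ [(x, A)]) G (map Var (ovars G))"

type_synonym ('v,'f,'s,'r) seq = "('v,'f,'s,'r) form \<times> ('v,'f,'s) ctx \<times> ('v,'f,'s,'r) form"

definition theory_over :: "('v set \<Rightarrow> 'v set) \<Rightarrow> ('v,'f,'s) decl set \<Rightarrow> ('v,'f,'s,'r) pdecl set
    \<Rightarrow> ('v,'f,'s,'r) seq set \<Rightarrow> bool" where
  "theory_over phi Sig Pi T \<longleftrightarrow>
     (\<forall>(a, G, b)\<in>T. (a, G) \<in> forms phi Sig Pi \<and> (b, G) \<in> forms phi Sig Pi)"

inductive_set thms :: "('v set \<Rightarrow> 'v set) \<Rightarrow> ('v set \<Rightarrow> 'v) \<Rightarrow> ('v,'f,'s) decl set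
    \<Rightarrow> ('v,'f,'s,'r) pdecl set \<Rightarrow> ('v,'f,'s,'r) seq set \<Rightarrow> ('v,'f,'s,'r) seq set"
  for phi fr Sig Pi T where
  ax: "s \<in> T \<Longrightarrow> s \<in> thms phi fr Sig Pi T"
| refl: "(a, G) \<in> forms phi Sig Pi \<Longrightarrow> (a, G, a) \<in> thms phi fr Sig Pi T"
| cut: "\<lbrakk> (a, G, c) \<in> thms phi fr Sig Pi T; (c, G, b) \<in> thms phi fr Sig Pi T \<rbrakk>
        \<Longrightarrow> (a, G, b) \<in> thms phi fr Sig Pi T"
| andE1: "(FAnd c b, G) \<in> forms phi Sig Pi \<Longrightarrow> (FAnd c b, G, c) \<in> thms phi fr Sig Pi T"
| andE2: "(FAnd c b, G) \<in> forms phi Sig Pi \<Longrightarrow> (FAnd c b, G, b) \<in> thms phi fr Sig Pi T"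
| andI: "\<lbrakk> (a, G, c) \<in> thms phi fr Sig Pi T; (a, G, b) \<in> thms phi fr Sig Pi T \<rbrakk>
        \<Longrightarrow> (a, G, FAnd c b) \<in> thms phi fr Sig Pi T"
| topI: "\<lbrakk> (a, G) \<in> forms phi Sig Pi; (FTop, G) \<in> forms phi Sig Pi \<rbrakk>
        \<Longrightarrow> (a, G, FTop) \<in> thms phi fr Sig Pi T"
| orI1: "(FOr c b, G) \<in> forms phi Sig Pi \<Longrightarrow> (c, G, FOr c b) \<in> thms phi fr Sig Pi T"
| orI2: "(FOr c b, G) \<in> forms phi Sig Pi \<Longrightarrow> (b, G, FOr c b) \<in> thms phi fr Sig Pi T"
| orE: "\<lbrakk> (c, G, a) \<in> thms phi fr Sig Pi T; (b, G, a) \<in> thms phi fr Sig Pi T \<rbrakk>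
        \<Longrightarrow> (FOr c b, G, a) \<in> thms phi fr Sig Pi T"
| botE: "\<lbrakk> (a, G) \<in> forms phi Sig Pi; (FBot, G) \<in> forms phi Sig Pi \<rbrakk>
        \<Longrightarrow> (FBot, G, a) \<in> thms phi fr Sig Pi T"
| impI: "(FAnd c b, G, a) \<in> thms phi fr Sig Pi T \<Longrightarrow> (c, G, FImp b a) \<in> thms phi fr Sig Pi T"
| impE: "(c, G, FImp b a) \<in> thms phi fr Sig Pi T \<Longrightarrow> (FAnd c b, G, a) \<in> thms phi fr Sig Pi T"
| allI: "\<lbrakk> (fweak fr a G x A, G @ [(x, A)], b) \<in> thms phi fr Sig Pi T;
           (a, G) \<in> forms phi Sig Pi; (FAll x A b, G) \<in> forms phi Sig Pi \<rbrakk>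
        \<Longrightarrow> (a, G, FAll x A b) \<in> thms phi fr Sig Pi T"
| allE: "(a, G, FAll x A b) \<in> thms phi fr Sig Pi T
        \<Longrightarrow> (fweak fr a G x A, G @ [(x, A)], b) \<in> thms phi fr Sig Pi T"
| exE: "\<lbrakk> (b, G @ [(x, A)], fweak fr a G x A) \<in> thms phi fr Sig Pi T;
           (a, G) \<in> forms phi Sig Pi; (FEx x A b, G) \<in> forms phi Sig Pi \<rbrakk>
        \<Longrightarrow> (FEx x A b, G, a) \<in> thms phi fr Sig Pi T"
| exI: "(FEx x A b, G, a) \<in> thms phi fr Sig Pi T
        \<Longrightarrow> (b, G @ [(x, A)], fweak fr a G x A) \<in> thms phi fr Sig Pi T"
| subst: "\<lbrakk> (a, G, b) \<in> thms phi fr Sig Pi T; mor_judg (judg phi Sig) D G as \<rbrakk>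
        \<Longrightarrow> (fsub fr a D G as, D, fsub fr b D G as) \<in> thms phi fr Sig Pi T"

definition LT :: "('v set \<Rightarrow> 'v set) \<Rightarrow> ('v set \<Rightarrow> 'v) \<Rightarrow> ('v,'f,'s) decl set
    \<Rightarrow> ('v,'f,'s,'r) pdecl set \<Rightarrow> ('v,'f,'s,'r) seq set
    \<Rightarrow> (('v,'f,'s) ctx, ('v,'f,'s) smor, ('v,'f,'s) sty, ('v,'f,'s) ctx \<times> ('v,'f,'s,'r) form) hyperdoc" where
  "LT phi fr Sig Pi T = \<lparr>
     hd_Pr = (\<lambda>G. \<lparr> hcar = {(G, a) |a. (a, G) \<in> forms phi Sig Pi},
                    hle = (\<lambda>(G1, a) (G2, b). (a, G1, b) \<in> thms phi fr Sig Pi T),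
                    htop = (G, FTop), hbot = (G, FBot),
                    hmeet = (\<lambda>(_, a) (_, b). (G, FAnd a b)),
                    hjoin = (\<lambda>(_, a) (_, b). (G, FOr a b)),
                    himp = (\<lambda>(_, a) (_, b). (G, FImp a b)) \<rparr>),
     hd_sub = (\<lambda>(G', a) (D, G, as). (D, fsub fr a D G as)),
     hd_all = (\<lambda>G X (_, b). (G, FAll (fresh fr G) (snd X) b)),
     hd_ex = (\<lambda>G X (_, b). (G, FEx (fresh fr G) (snd X) b)) \<rparr>"

end

theory Submission
  imports Defs
begin

lemma finite_vars_tm: "finite (vars_tm t)"
  by (induction t) auto

lemma finite_vars_ty: "finite (vars_ty A)"
  by (cases A) (auto simp: finite_vars_tm)

lemma finite_vars_ctx: "finite (vars_ctx G)"
  by (auto simp: vars_ctx_def finite_vars_ty)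

lemma subst_tm_cong: "(\<And>v. v \<in> vars_tm t \<Longrightarrow> s1 v = s2 v) \<Longrightarrow> subst_tm s1 t = subst_tm s2 t"
  by (induction t) auto

lemma subst_ty_cong: "(\<And>v. v \<in> vars_ty A \<Longrightarrow> s1 v = s2 v) \<Longrightarrow> subst_ty s1 A = subst_ty s2 A"
  by (cases A) (auto intro!: subst_tm_cong)

lemma subst_tm_comp: "subst_tm s2 (subst_tm s1 t) = subst_tm (\<lambda>v. subst_tm s2 (s1 v)) t"
  by (induction t) auto

lemma subst_ty_comp: "subst_ty s2 (subst_ty s1 A) = subst_ty (\<lambda>v. subst_tm s2 (s1 v)) A"
  by (cases A) (auto simp: subst_tm_comp)

lemma subst_tm_id: "subst_tm Var t = t"
  by (induction t) (auto simp: map_idI)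

lemma subst_ty_id: "subst_ty Var A = A"
  by (cases A) (auto simp: subst_tm_id map_idI)

lemma sub_of_id: "sub_of xs (map Var xs) = Var"
proof
  fix v show "sub_of xs (map Var xs) v = Var v"
    unfolding sub_of_def by (induction xs) auto
qed

lemma sub_of_map: "length xs = length as \<Longrightarrow> v \<in> set xs \<Longrightarrow>
  sub_of xs (map f as) v = f (sub_of xs as v)"
  unfolding sub_of_def
  by (induction xs as rule: list_induct2) auto

lemma sub_of_take: "length xs = length as \<Longrightarrow> v \<in> set (take k xs) \<Longrightarrow>
  sub_of xs as v = sub_of (take k xs) (take k as) v"
  unfolding sub_of_def
proof (induction xs as arbitrary: k rule: list_induct2)
  case Nil then show ?case by simp
next
  case (Cons x xs a as) then show ?case by (cases k) auto
qed

lemma sub_of_nth: "length xs = length as \<Longrightarrow> distinct xs \<Longrightarrow> i < length xs \<Longrightarrow>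
  sub_of xs as (xs ! i) = as ! i"
  unfolding sub_of_def
  by (simp add: map_of_zip_nth)

lemma sub_of_notin: "v \<notin> set xs \<Longrightarrow> sub_of xs as v = Var v"
proof -
  assume "v \<notin> set xs"
  then have "map_of (zip xs as) v = None"
    by (auto simp: map_of_eq_None_iff dest: set_zip_leftD)
  then show ?thesis by (simp add: sub_of_def)
qed


lemma sigTy: "signature phi Sig \<Longrightarrow> TyDecl G S is \<in> Sig \<Longrightarrow> CtxJ G \<in> judg phi Sig \<and> determining G is"
  unfolding signature_def by (elim conjE) (drule spec, drule spec, drule spec, erule mp)
lemma sigFn: "signature phi Sig \<Longrightarrow> FnDecl G f is U \<in> Sig \<Longrightarrow> CtxJ G \<in> judg phi Sig \<and> determining G is
         \<and> vars_ty U \<subseteq> vars_ctx G \<and> TypeJ U G \<in> judg phi Sig"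
  unfolding signature_def by (elim conjE) (drule spec, drule spec, drule spec,drule spec, erule mp)
lemma det_lt: "determining G is \<Longrightarrow> i \<in> set is \<Longrightarrow> i < length G"
  unfolding determining_def by blast
lemma vs_disj: "var_system phi fr \<Longrightarrow> finite X \<Longrightarrow> x \<in> phi X \<Longrightarrow> x \<notin> X"
  unfolding var_system_def by (meson disjoint_iff)
lemma vs_fr: "var_system phi fr \<Longrightarrow> finite X \<Longrightarrow> fr X \<in> phi X"
  unfolding var_system_def by meson


definition scoped :: "('v,'f,'s) jdg \<Rightarrow> bool" where
  "scoped J = (case J of
      CtxJ G \<Rightarrow> distinct (ovars G) \<and> (\<forall>k<length G. vars_ty (snd (G!k)) \<subseteq> set (take k (ovars G)))
    | TypeJ A G \<Rightarrow> vars_ty A \<subseteq> set (ovars G)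
    | ElemJ a A G \<Rightarrow> vars_tm a \<subseteq> set (ovars G) \<and> vars_ty A \<subseteq> set (ovars G))"

lemma ovars_sub_vars_ctx: "set (ovars G) \<subseteq> vars_ctx G"
  by (auto simp: ovars_def vars_ctx_def)

lemma judg_scoped:
  assumes vs: "var_system phi fr" and sig: "signature phi Sig"
  shows "J \<in> judg phi Sig \<Longrightarrow> scoped J"
proof (induction rule: judg.induct)
  case R1
  then show ?case by (simp add: scoped_def ovars_def)
next
  case (R2 G A x)
  have "x \<notin> vars_ctx G" using vs_disj[OF vs finite_vars_ctx \<open>x \<in> phi (vars_ctx G)\<close>] .
  then have "x \<notin> set (ovars G)" using ovars_sub_vars_ctx[of G] by auto
  moreover have "\<forall>k<length (G @ [(x, A)]). vars_ty (snd ((G @ [(x, A)])!k)) \<subseteq> set (take k (ovars (G @ [(x, A)])))"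
  proof (intro HOL.allI HOL.impI)
    fix k assume k: "k < length (G @ [(x, A)])"
    show "vars_ty (snd ((G @ [(x, A)])!k)) \<subseteq> set (take k (ovars (G @ [(x, A)])))"
    proof (cases "k < length G")
      case True
      then show ?thesis using \<open>scoped (CtxJ G)\<close> by (auto simp: scoped_def ovars_def nth_append)
    next
      case False
      then have "k = length G" using k by simp
      then show ?thesis using \<open>scoped (TypeJ A G)\<close> by (auto simp: scoped_def ovars_def nth_append)
    qed
  qed
  ultimately show ?case using \<open>scoped (CtxJ G)\<close> by (auto simp: scoped_def ovars_def)
next
  case (R3 G i)
  have "vars_ty (snd (G!i)) \<subseteq> set (take i (ovars G))" using R3 by (simp add: scoped_def)
  also have "\<dots> \<subseteq> set (ovars G)" by (rule set_take_subset)
  finally show ?case using \<open>i < length G\<close> by (auto simp: scoped_def ovars_def)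
next
  case (R4 G S "is" D as)
  have det: "\<forall>i\<in>set is. i < length G" using sigTy[OF sig R4(1)] det_lt by blast
  have len: "length as = length G" using \<open>mor_judg {x \<in> judg phi Sig. scoped x} D G as\<close> by (simp add: mor_judg_def)
  have "\<forall>k<length G. vars_tm (as!k) \<subseteq> set (ovars D)"
  proof (intro HOL.allI HOL.impI)
    fix k assume "k < length G"
    then have "scoped (ElemJ (as ! k) (subst_ty (sub_of (take k (ovars G)) (take k as)) (snd (G ! k))) D)"
      using \<open>mor_judg {x \<in> judg phi Sig. scoped x} D G as\<close> unfolding mor_judg_def by blast
    then show "vars_tm (as!k) \<subseteq> set (ovars D)" by (simp add: scoped_def)
  qed
  then show ?case using det len by (auto simp: scoped_def)
next
  case (R5 G f "is" U D as)
  have det: "\<forall>i\<in>set is. i < length G" using sigFn[OF sig R5(1)] det_lt by blast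
  have len: "length as = length G" using \<open>mor_judg {x \<in> judg phi Sig. scoped x} D G as\<close> by (simp add: mor_judg_def)
  have "\<forall>k<length G. vars_tm (as!k) \<subseteq> set (ovars D)"
  proof (intro HOL.allI HOL.impI)
    fix k assume "k < length G"
    then have "scoped (ElemJ (as ! k) (subst_ty (sub_of (take k (ovars G)) (take k as)) (snd (G ! k))) D)"
      using \<open>mor_judg {x \<in> judg phi Sig. scoped x} D G as\<close> unfolding mor_judg_def by blast
    then show "vars_tm (as!k) \<subseteq> set (ovars D)" by (simp add: scoped_def)
  qed
  then show ?case using det len \<open>scoped (TypeJ (subst_ty (sub_of (ovars G) as) U) D)\<close> by (auto simp: scoped_def)
qed


lemma ctx_scoped:
  assumes "var_system phi fr" "signature phi Sig" "CtxJ G \<in> judg phi Sig"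
  shows "distinct (ovars G)" "\<And>k. k < length G \<Longrightarrow> vars_ty (snd (G!k)) \<subseteq> set (take k (ovars G))"
  using judg_scoped[OF assms] by (auto simp: scoped_def)

lemma ty_scoped:
  assumes "var_system phi fr" "signature phi Sig" "TypeJ A G \<in> judg phi Sig"
  shows "vars_ty A \<subseteq> set (ovars G)"
  using judg_scoped[OF assms] by (auto simp: scoped_def)

lemma vars_ctx_ovars:
  assumes "var_system phi fr" "signature phi Sig" "CtxJ G \<in> judg phi Sig"
  shows "vars_ctx G = set (ovars G)"
proof
  show "set (ovars G) \<subseteq> vars_ctx G" by (rule ovars_sub_vars_ctx)
  show "vars_ctx G \<subseteq> set (ovars G)"
  proof
    fix v assume "v \<in> vars_ctx G"
    then consider "v \<in> set (map fst G)" | p where "p \<in> set G" "v \<in> vars_ty (snd p)"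
      unfolding vars_ctx_def by auto
    then show "v \<in> set (ovars G)"
    proof cases
      case 1 then show ?thesis by (simp add: ovars_def)
    next
      case 2
      then obtain k where k: "k < length G" "G!k = p" by (meson in_set_conv_nth)
      then have "vars_ty (snd (G!k)) \<subseteq> set (take k (ovars G))" using ctx_scoped[OF assms] by blast
      then show ?thesis using 2 k set_take_subset by fastforce
    qed
  qed
qed

lemma subst_ty_comp_sub:
  assumes "vars_ty U \<subseteq> set xs" "length xs = length as"
  shows "subst_ty s (subst_ty (sub_of xs as) U) = subst_ty (sub_of xs (map (subst_tm s) as)) U"
  unfolding subst_ty_comp
proof (rule subst_ty_cong)
  fix v assume "v \<in> vars_ty U"
  then have "v \<in> set xs" using assms(1) by blast
  then show "subst_tm s (sub_of xs as v) = sub_of xs (map (subst_tm s) as) v"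
    using sub_of_map[OF assms(2) \<open>v \<in> set xs\<close>, of "subst_tm s"] by simp
qed

lemma mor_comp_gen:
  assumes vs: "var_system phi fr" and sig: "signature phi Sig"
    and G0: "CtxJ G0 \<in> judg phi Sig" and D: "CtxJ D \<in> judg phi Sig" and len: "length as0 = length G0"
    and el: "\<And>k. k < length G0 \<Longrightarrow> ElemJ (subst_tm s (as0!k))
       (subst_ty s (subst_ty (sub_of (take k (ovars G0)) (take k as0)) (snd (G0!k)))) D \<in> judg phi Sig"
  shows "mor_judg (judg phi Sig) D G0 (map (subst_tm s) as0)"
  unfolding mor_judg_def
proof (intro conjI HOL.allI HOL.impI)
  fix k assume k: "k < length G0"
  have "subst_ty s (subst_ty (sub_of (take k (ovars G0)) (take k as0)) (snd (G0!k)))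
      = subst_ty (sub_of (take k (ovars G0)) (map (subst_tm s) (take k as0))) (snd (G0!k))"
    by (rule subst_ty_comp_sub) (use ctx_scoped(2)[OF vs sig G0 k] len in \<open>auto simp: ovars_def\<close>)
  then show "ElemJ (map (subst_tm s) as0 ! k)
          (subst_ty (sub_of (take k (ovars G0)) (take k (map (subst_tm s) as0))) (snd (G0 ! k))) D
         \<in> judg phi Sig"
    using el[OF k] k len by (simp add: take_map)
qed (use G0 D len in auto)


definition substok :: "('v set \<Rightarrow> 'v set) \<Rightarrow> ('v,'f,'s) decl set \<Rightarrow> ('v,'f,'s) jdg \<Rightarrow> bool" where
  "substok phi Sig J = (case J of
      CtxJ G \<Rightarrow> True
    | TypeJ A G \<Rightarrow> (\<forall>D as. mor_judg (judg phi Sig) D G as \<longrightarrow>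
          TypeJ (subst_ty (sub_of (ovars G) as) A) D \<in> judg phi Sig)
    | ElemJ a A G \<Rightarrow> (\<forall>D as. mor_judg (judg phi Sig) D G as \<longrightarrow>
          ElemJ (subst_tm (sub_of (ovars G) as) a) (subst_ty (sub_of (ovars G) as) A) D \<in> judg phi Sig))"

lemma map_nth_subst:
  "\<forall>i\<in>set is. i < length as \<Longrightarrow> map (subst_tm s) (map ((!) as) is) = map ((!) (map (subst_tm s) as)) is"
  by auto

lemma judg_substok:
  assumes vs: "var_system phi fr" and sig: "signature phi Sig"
  shows "J \<in> judg phi Sig \<Longrightarrow> substok phi Sig J"
proof (induction rule: judg.induct)
  case R1 then show ?case by (simp add: substok_def)
next
  case (R2 G A x) then show ?case by (simp add: substok_def)
next
  case (R3 G i)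
  show ?case unfolding substok_def
  proof (simp, intro HOL.allI HOL.impI)
    fix D as assume m: "mor_judg (judg phi Sig) D G as"
    have len: "length as = length G" using m by (simp add: mor_judg_def)
    have dist: "distinct (ovars G)" using ctx_scoped(1)[OF vs sig \<open>CtxJ G \<in> judg phi Sig\<close>] .
    have i: "i < length G" by fact
    have "sub_of (ovars G) as (fst (G!i)) = as ! i"
      using sub_of_nth[of "ovars G" as i] len dist i by (simp add: ovars_def)
    moreover have "subst_ty (sub_of (ovars G) as) (snd (G!i))
        = subst_ty (sub_of (take i (ovars G)) (take i as)) (snd (G!i))"
    proof (rule subst_ty_cong)
      fix v assume "v \<in> vars_ty (snd (G!i))"
      then have "v \<in> set (take i (ovars G))" using ctx_scoped(2)[OF vs sig \<open>CtxJ G \<in> judg phi Sig\<close> i] by blast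
      then show "sub_of (ovars G) as v = sub_of (take i (ovars G)) (take i as) v"
        using sub_of_take[of "ovars G" as v i] len by (simp add: ovars_def)
    qed
    ultimately show "ElemJ (sub_of (ovars G) as (fst (G ! i))) (subst_ty (sub_of (ovars G) as) (snd (G ! i))) D
         \<in> judg phi Sig"
      using m i unfolding mor_judg_def by simp
  qed
next
  case (R4 G0 S "is" D0 as0)
  note m0 = \<open>mor_judg {x \<in> judg phi Sig. substok phi Sig x} D0 G0 as0\<close>
  have det: "\<forall>i\<in>set is. i < length G0" using sigTy[OF sig R4(1)] det_lt by blast
  have len: "length as0 = length G0" using m0 by (simp add: mor_judg_def)
  have G0: "CtxJ G0 \<in> judg phi Sig" using m0 by (simp add: mor_judg_def)
  show ?case unfolding substok_def
  proof (simp only: jdg.case subst_ty.simps subst_tm.simps, intro HOL.allI HOL.impI)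
    fix D bs assume m: "mor_judg (judg phi Sig) D D0 bs"
    let ?s = "sub_of (ovars D0) bs"
    have "mor_judg (judg phi Sig) D G0 (map (subst_tm ?s) as0)"
    proof (rule mor_comp_gen[OF vs sig G0 _ len])
      show "CtxJ D \<in> judg phi Sig" using m by (simp add: mor_judg_def)
      fix k assume k: "k < length G0"
      then have "substok phi Sig (ElemJ (as0 ! k) (subst_ty (sub_of (take k (ovars G0)) (take k as0)) (snd (G0 ! k))) D0)"
        using m0 unfolding mor_judg_def by blast
      then show "ElemJ (subst_tm ?s (as0 ! k))
          (subst_ty ?s (subst_ty (sub_of (take k (ovars G0)) (take k as0)) (snd (G0 ! k)))) D \<in> judg phi Sig"
        using m unfolding substok_def by simp
    qed
    note mm = this
    have eq: "map (subst_tm ?s) (map ((!) as0) is) = map ((!) (map (subst_tm ?s) as0)) is"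
      by (rule map_nth_subst) (use det len in simp)
    show "TypeJ (TyApp S (map (subst_tm ?s) (map ((!) as0) is))) D \<in> judg phi Sig"
      by (subst eq) (rule judg.R4[OF R4(1) mm])
  qed
next
  case (R5 G0 f "is" U D0 as0)
  note m0 = \<open>mor_judg {x \<in> judg phi Sig. substok phi Sig x} D0 G0 as0\<close>
  have sF: "CtxJ G0 \<in> judg phi Sig \<and> determining G0 is \<and> vars_ty U \<subseteq> vars_ctx G0 \<and> TypeJ U G0 \<in> judg phi Sig"
    using sigFn[OF sig R5(1)] .
  have det: "\<forall>i\<in>set is. i < length G0" using sF det_lt by blast
  have len: "length as0 = length G0" using m0 by (simp add: mor_judg_def)
  have G0: "CtxJ G0 \<in> judg phi Sig" using m0 by (simp add: mor_judg_def)
  have Usc: "vars_ty U \<subseteq> set (ovars G0)" using sF vars_ctx_ovars[OF vs sig G0] by simp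
  have leno: "length (ovars G0) = length as0" using len by (simp add: ovars_def)
  show ?case unfolding substok_def
  proof (simp only: jdg.case subst_ty.simps subst_tm.simps, intro HOL.allI HOL.impI)
    fix D bs assume m: "mor_judg (judg phi Sig) D D0 bs"
    let ?s = "sub_of (ovars D0) bs"
    have m': "mor_judg (judg phi Sig) D G0 (map (subst_tm ?s) as0)"
    proof (rule mor_comp_gen[OF vs sig G0 _ len])
      show "CtxJ D \<in> judg phi Sig" using m by (simp add: mor_judg_def)
      fix k assume k: "k < length G0"
      then have "substok phi Sig (ElemJ (as0 ! k) (subst_ty (sub_of (take k (ovars G0)) (take k as0)) (snd (G0 ! k))) D0)"
        using m0 unfolding mor_judg_def by blast
      then show "ElemJ (subst_tm ?s (as0 ! k))
          (subst_ty ?s (subst_ty (sub_of (take k (ovars G0)) (take k as0)) (snd (G0 ! k)))) D \<in> judg phi Sig"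
        using m unfolding substok_def by simp
    qed
    have eqU: "subst_ty ?s (subst_ty (sub_of (ovars G0) as0) U)
        = subst_ty (sub_of (ovars G0) (map (subst_tm ?s) as0)) U"
      by (rule subst_ty_comp_sub[OF Usc leno])
    have "TypeJ (subst_ty ?s (subst_ty (sub_of (ovars G0) as0) U)) D \<in> judg phi Sig"
      using \<open>substok phi Sig (TypeJ (subst_ty (sub_of (ovars G0) as0) U) D0)\<close> m
      unfolding substok_def by simp
    then have ty: "TypeJ (subst_ty (sub_of (ovars G0) (map (subst_tm ?s) as0)) U) D \<in> judg phi Sig"
      using eqU by simp
    have eq: "map (subst_tm ?s) (map ((!) as0) is) = map ((!) (map (subst_tm ?s) as0)) is"
      by (rule map_nth_subst) (use det len in simp)
    show "ElemJ (App f (map (subst_tm ?s) (map ((!) as0) is)))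
          (subst_ty ?s (subst_ty (sub_of (ovars G0) as0) U)) D \<in> judg phi Sig"
      by (subst eq, subst eqU) (rule judg.R5[OF R5(1) m' ty])
  qed
qed

lemma subst_type:
  assumes "var_system phi fr" "signature phi Sig" "TypeJ A G \<in> judg phi Sig"
    "mor_judg (judg phi Sig) D G as"
  shows "TypeJ (subst_ty (sub_of (ovars G) as) A) D \<in> judg phi Sig"
  using judg_substok[OF assms(1-3)] assms(4) by (simp add: substok_def)

lemma subst_elem:
  assumes "var_system phi fr" "signature phi Sig" "ElemJ a A G \<in> judg phi Sig"
    "mor_judg (judg phi Sig) D G as"
  shows "ElemJ (subst_tm (sub_of (ovars G) as) a) (subst_ty (sub_of (ovars G) as) A) D \<in> judg phi Sig"
  using judg_substok[OF assms(1-3)] assms(4) by (simp add: substok_def)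


lemma mor_comp:
  assumes vs: "var_system phi fr" and sig: "signature phi Sig"
    and m0: "mor_judg (judg phi Sig) D0 G0 as0" and m: "mor_judg (judg phi Sig) D D0 bs"
  shows "mor_judg (judg phi Sig) D G0 (map (subst_tm (sub_of (ovars D0) bs)) as0)"
proof (rule mor_comp_gen[OF vs sig])
  show "CtxJ G0 \<in> judg phi Sig" "length as0 = length G0" using m0 by (auto simp: mor_judg_def)
  show "CtxJ D \<in> judg phi Sig" using m by (simp add: mor_judg_def)
  fix k assume "k < length G0"
  then have "ElemJ (as0 ! k) (subst_ty (sub_of (take k (ovars G0)) (take k as0)) (snd (G0 ! k))) D0 \<in> judg phi Sig"
    using m0 by (simp add: mor_judg_def)
  from subst_elem[OF vs sig this m]
  show "ElemJ (subst_tm (sub_of (ovars D0) bs) (as0 ! k))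
          (subst_ty (sub_of (ovars D0) bs) (subst_ty (sub_of (take k (ovars G0)) (take k as0)) (snd (G0 ! k)))) D
         \<in> judg phi Sig" .
qed

lemma ctx_snoc_inv:
  assumes "CtxJ (G @ [(x, A)]) \<in> judg phi Sig"
  shows "CtxJ G \<in> judg phi Sig" "TypeJ A G \<in> judg phi Sig" "x \<in> phi (vars_ctx G)"
  using assms by (cases rule: judg.cases; auto)+

lemma mor_proj:
  assumes "CtxJ (D @ [(y, B)]) \<in> judg phi Sig"
  shows "mor_judg (judg phi Sig) (D @ [(y, B)]) D (map Var (ovars D))"
  unfolding mor_judg_def
proof (intro conjI HOL.allI HOL.impI)
  show "CtxJ D \<in> judg phi Sig" using ctx_snoc_inv(1)[OF assms] .
  fix k assume k: "k < length D"
  have "ElemJ (Var (fst ((D @ [(y, B)]) ! k))) (snd ((D @ [(y, B)]) ! k)) (D @ [(y, B)]) \<in> judg phi Sig"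
    by (rule judg.R3[OF assms]) (use k in simp)
  then show "ElemJ (map Var (ovars D) ! k)
          (subst_ty (sub_of (take k (ovars D)) (take k (map Var (ovars D)))) (snd (D ! k))) (D @ [(y, B)])
         \<in> judg phi Sig"
    using k unfolding take_map sub_of_id subst_ty_id by (simp add: nth_append ovars_def)
qed (use assms in \<open>auto simp: ovars_def\<close>)

lemma weaken_elem:
  assumes vs: "var_system phi fr" and sig: "signature phi Sig"
    and "ElemJ a B D \<in> judg phi Sig" "CtxJ (D @ [(y, C)]) \<in> judg phi Sig"
  shows "ElemJ a B (D @ [(y, C)]) \<in> judg phi Sig"
  using subst_elem[OF vs sig assms(3) mor_proj[OF assms(4)]]
  by (simp add: sub_of_id subst_ty_id subst_tm_id)

lemma mor_lift:
  assumes vs: "var_system phi fr" and sig: "signature phi Sig"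
    and m: "mor_judg (judg phi Sig) D G as" and A: "TypeJ A G \<in> judg phi Sig"
    and GA: "CtxJ (G @ [(x, A)]) \<in> judg phi Sig"
  shows "CtxJ (D @ [(fresh fr D, subst_ty (sub_of (ovars G) as) A)]) \<in> judg phi Sig"
    "mor_judg (judg phi Sig) (D @ [(fresh fr D, subst_ty (sub_of (ovars G) as) A)]) (G @ [(x, A)])
       (as @ [Var (fresh fr D)])"
proof -
  let ?A' = "subst_ty (sub_of (ovars G) as) A" and ?y = "fresh fr D"
  have D: "CtxJ D \<in> judg phi Sig" using m by (simp add: mor_judg_def)
  have len: "length as = length G" using m by (simp add: mor_judg_def)
  have DA: "CtxJ (D @ [(?y, ?A')]) \<in> judg phi Sig"
    by (rule judg.R2[OF D subst_type[OF vs sig A m]])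
       (simp add: fresh_def vs_fr[OF vs finite_vars_ctx])
  then show "CtxJ (D @ [(?y, ?A')]) \<in> judg phi Sig" .
  show "mor_judg (judg phi Sig) (D @ [(?y, ?A')]) (G @ [(x, A)]) (as @ [Var ?y])"
    unfolding mor_judg_def
  proof (intro conjI HOL.allI HOL.impI)
    show "CtxJ (D @ [(?y, ?A')]) \<in> judg phi Sig" by (rule DA)
    show "CtxJ (G @ [(x, A)]) \<in> judg phi Sig" by (rule GA)
    show "length (as @ [Var ?y]) = length (G @ [(x, A)])" using len by simp
    fix k assume k: "k < length (G @ [(x, A)])"
    show "ElemJ ((as @ [Var ?y]) ! k)
          (subst_ty (sub_of (take k (ovars (G @ [(x, A)]))) (take k (as @ [Var ?y]))) (snd ((G @ [(x, A)]) ! k)))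
          (D @ [(?y, ?A')]) \<in> judg phi Sig"
    proof (cases "k < length G")
      case True
      then have "ElemJ (as ! k) (subst_ty (sub_of (take k (ovars G)) (take k as)) (snd (G ! k))) D \<in> judg phi Sig"
        using m by (simp add: mor_judg_def)
      from weaken_elem[OF vs sig this DA]
      show ?thesis using True len by (simp add: nth_append ovars_def)
    next
      case False
      then have kk: "k = length G" using k by simp
      have "ElemJ (Var (fst ((D @ [(?y, ?A')]) ! length D))) (snd ((D @ [(?y, ?A')]) ! length D)) (D @ [(?y, ?A')])
           \<in> judg phi Sig"
        by (rule judg.R3[OF DA]) simp
      then show ?thesis using kk len by (simp add: nth_append ovars_def)
    qed
  qed
qed

lemma forms_ctx: "(a, G) \<in> forms phi Sig Pi \<Longrightarrow> CtxJ G \<in> judg phi Sig"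
  by (induction rule: forms.induct) (auto simp: mor_judg_def dest: ctx_snoc_inv(1))


lemma psig_det: "pred_signature phi Sig Pi \<Longrightarrow> (G, is, R) \<in> Pi \<Longrightarrow> determining G is"
  unfolding pred_signature_def by fast

lemma forms_fsub:
  assumes vs: "var_system phi fr" and sig: "signature phi Sig" and psig: "pred_signature phi Sig Pi"
  shows "(a, G) \<in> forms phi Sig Pi \<Longrightarrow> mor_judg (judg phi Sig) D G as
     \<Longrightarrow> (fsub fr a D G as, D) \<in> forms phi Sig Pi"
proof (induction arbitrary: D as rule: forms.induct)
  case (atom G0 "is" R D0 as0)
  let ?s = "sub_of (ovars D0) as"
  have det: "\<forall>i\<in>set is. i < length G0" using psig_det[OF psig atom(1)] det_lt by blast
  have len: "length as0 = length G0" using atom(2) by (simp add: mor_judg_def)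
  have eq: "map (subst_tm ?s) (map ((!) as0) is) = map ((!) (map (subst_tm ?s) as0)) is"
    by (rule map_nth_subst) (use det len in simp)
  show ?case
    by (simp only: fsub.simps, subst eq) (rule forms.atom[OF atom(1) mor_comp[OF vs sig atom(2) atom(3)]])
next
  case (bot G)
  then show ?case by (auto simp: mor_judg_def intro: forms.bot)
next
  case (top G)
  then show ?case by (auto simp: mor_judg_def intro: forms.top)
next
  case (conj a G b)
  then show ?case by (auto intro: forms.conj)
next
  case (disj a G b)
  then show ?case by (auto intro: forms.disj)
next
  case (imp a G b)
  then show ?case by (auto intro: forms.imp)
next
  case (all a G x A)
  have GA: "CtxJ (G @ [(x, A)]) \<in> judg phi Sig" using forms_ctx[OF all.hyps(1)] .
  note ml = mor_lift[OF vs sig \<open>mor_judg (judg phi Sig) D G as\<close> \<open>TypeJ A G \<in> judg phi Sig\<close> GA]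
  have "(fsub fr a (D @ [(fresh fr D, subst_ty (sub_of (ovars G) as) A)]) (G @ [(x, A)]) (as @ [Var (fresh fr D)]), 
         D @ [(fresh fr D, subst_ty (sub_of (ovars G) as) A)]) \<in> forms phi Sig Pi"
    using all.IH ml(2) by blast
  then show ?case
    by (simp add: Let_def) (rule forms.all, assumption, rule subst_type[OF vs sig \<open>TypeJ A G \<in> judg phi Sig\<close> \<open>mor_judg (judg phi Sig) D G as\<close>])
next
  case (ex a G x A)
  have GA: "CtxJ (G @ [(x, A)]) \<in> judg phi Sig" using forms_ctx[OF ex.hyps(1)] .
  note ml = mor_lift[OF vs sig \<open>mor_judg (judg phi Sig) D G as\<close> \<open>TypeJ A G \<in> judg phi Sig\<close> GA]
  have "(fsub fr a (D @ [(fresh fr D, subst_ty (sub_of (ovars G) as) A)]) (G @ [(x, A)]) (as @ [Var (fresh fr D)]), 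
         D @ [(fresh fr D, subst_ty (sub_of (ovars G) as) A)]) \<in> forms phi Sig Pi"
    using ex.IH ml(2) by blast
  then show ?case
    by (simp add: Let_def) (rule forms.ex, assumption, rule subst_type[OF vs sig \<open>TypeJ A G \<in> judg phi Sig\<close> \<open>mor_judg (judg phi Sig) D G as\<close>])
qed


lemma hp_parts: assumes "heyting_prealg H" shows
  "\<forall>x\<in>hcar H. hle H x x"
  "\<forall>x\<in>hcar H. \<forall>y\<in>hcar H. \<forall>z\<in>hcar H. hle H x y \<longrightarrow> hle H y z \<longrightarrow> hle H x z"
  "htop H \<in> hcar H" "hbot H \<in> hcar H"
  "\<forall>x\<in>hcar H. \<forall>y\<in>hcar H. hmeet H x y \<in> hcar H \<and> hjoin H x y \<in> hcar H \<and> himp H x y \<in> hcar H"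
  "\<forall>x\<in>hcar H. hle H (hbot H) x \<and> hle H x (htop H)"
  "\<forall>x\<in>hcar H. \<forall>y\<in>hcar H. \<forall>z\<in>hcar H.
        (hle H z (hmeet H x y) \<longleftrightarrow> hle H z x \<and> hle H z y) \<and>
        (hle H (hjoin H x y) z \<longleftrightarrow> hle H x z \<and> hle H y z) \<and>
        (hle H z (himp H x y) \<longleftrightarrow> hle H (hmeet H z x) y)"
proof -
  note h = assms[unfolded heyting_prealg_def]
  show "\<forall>x\<in>hcar H. hle H x x" using h by (rule conjunct1)
  note h = conjunct2[OF h]
  show "\<forall>x\<in>hcar H. \<forall>y\<in>hcar H. \<forall>z\<in>hcar H. hle H x y \<longrightarrow> hle H y z \<longrightarrow> hle H x z" using h by (rule conjunct1)
  note h = conjunct2[OF h]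
  show "htop H \<in> hcar H" using h by (rule conjunct1)
  note h = conjunct2[OF h]
  show "hbot H \<in> hcar H" using h by (rule conjunct1)
  note h = conjunct2[OF h]
  show "\<forall>x\<in>hcar H. \<forall>y\<in>hcar H. hmeet H x y \<in> hcar H \<and> hjoin H x y \<in> hcar H \<and> himp H x y \<in> hcar H" using h by (rule conjunct1)
  note h = conjunct2[OF h]
  show "\<forall>x\<in>hcar H. hle H (hbot H) x \<and> hle H x (htop H)" using h by (rule conjunct1)
  note h = conjunct2[OF h]
  show "\<forall>x\<in>hcar H. \<forall>y\<in>hcar H. \<forall>z\<in>hcar H.
        (hle H z (hmeet H x y) \<longleftrightarrow> hle H z x \<and> hle H z y) \<and>
        (hle H (hjoin H x y) z \<longleftrightarrow> hle H x z \<and> hle H y z) \<and>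
        (hle H z (himp H x y) \<longleftrightarrow> hle H (hmeet H z x) y)" using h .
qed

lemma hp_refl: "heyting_prealg H \<Longrightarrow> x \<in> hcar H \<Longrightarrow> hle H x x"
  using hp_parts(1) by blast
lemma hp_trans: "heyting_prealg H \<Longrightarrow> x \<in> hcar H \<Longrightarrow> y \<in> hcar H \<Longrightarrow> z \<in> hcar H \<Longrightarrow>
  hle H x y \<Longrightarrow> hle H y z \<Longrightarrow> hle H x z"
  using hp_parts(2) by metis
lemma hp_top: "heyting_prealg H \<Longrightarrow> x \<in> hcar H \<Longrightarrow> hle H x (htop H)"
  using hp_parts(6) by metis
lemma hp_bot: "heyting_prealg H \<Longrightarrow> x \<in> hcar H \<Longrightarrow> hle H (hbot H) x"
  using hp_parts(6) by metis
lemma hp_meet: "heyting_prealg H \<Longrightarrow> x \<in> hcar H \<Longrightarrow> y \<in> hcar H \<Longrightarrow> z \<in> hcar H \<Longrightarrow>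
  hle H z (hmeet H x y) \<longleftrightarrow> hle H z x \<and> hle H z y"
  using hp_parts(7) by metis
lemma hp_join: "heyting_prealg H \<Longrightarrow> x \<in> hcar H \<Longrightarrow> y \<in> hcar H \<Longrightarrow> z \<in> hcar H \<Longrightarrow>
  hle H (hjoin H x y) z \<longleftrightarrow> hle H x z \<and> hle H y z"
  using hp_parts(7) by metis
lemma hp_imp: "heyting_prealg H \<Longrightarrow> x \<in> hcar H \<Longrightarrow> y \<in> hcar H \<Longrightarrow> z \<in> hcar H \<Longrightarrow>
  hle H z (himp H x y) \<longleftrightarrow> hle H (hmeet H z x) y"
  using hp_parts(7) by metis
lemma hp_ops: "heyting_prealg H \<Longrightarrow> x \<in> hcar H \<Longrightarrow> y \<in> hcar H \<Longrightarrow>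
  hmeet H x y \<in> hcar H \<and> hjoin H x y \<in> hcar H \<and> himp H x y \<in> hcar H"
  using hp_parts(5) by metis
lemma hp_meet_le: "heyting_prealg H \<Longrightarrow> x \<in> hcar H \<Longrightarrow> y \<in> hcar H \<Longrightarrow>
  hle H (hmeet H x y) x \<and> hle H (hmeet H x y) y"
  by (meson hp_meet hp_ops hp_refl)
lemma hp_join_le: "heyting_prealg H \<Longrightarrow> x \<in> hcar H \<Longrightarrow> y \<in> hcar H \<Longrightarrow>
  hle H x (hjoin H x y) \<and> hle H y (hjoin H x y)"
  by (meson hp_join hp_ops hp_refl)

lemma forms_inv:
  "(FAnd a b, G) \<in> forms phi Sig Pi \<Longrightarrow> (a, G) \<in> forms phi Sig Pi \<and> (b, G) \<in> forms phi Sig Pi"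
  "(FOr a b, G) \<in> forms phi Sig Pi \<Longrightarrow> (a, G) \<in> forms phi Sig Pi \<and> (b, G) \<in> forms phi Sig Pi"
  "(FImp a b, G) \<in> forms phi Sig Pi \<Longrightarrow> (a, G) \<in> forms phi Sig Pi \<and> (b, G) \<in> forms phi Sig Pi"
  "(FAll x A b, G) \<in> forms phi Sig Pi \<Longrightarrow> (b, G @ [(x, A)]) \<in> forms phi Sig Pi \<and> TypeJ A G \<in> judg phi Sig"
  "(FEx x A b, G) \<in> forms phi Sig Pi \<Longrightarrow> (b, G @ [(x, A)]) \<in> forms phi Sig Pi \<and> TypeJ A G \<in> judg phi Sig"
  by (erule forms.cases; auto)+

lemma ctx_fresh:
  assumes "de_bruijn phi fr" "CtxJ (G @ [(x, A)]) \<in> judg phi Sig"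
  shows "x = fresh fr G"
  using ctx_snoc_inv(3)[OF assms(2)] assms(1) finite_vars_ctx[of G]
  unfolding de_bruijn_def fresh_def by auto


lemma cm_obj: "cwf_morphism C C' Fo Fm sg th \<Longrightarrow> X \<in> cw_obj C \<Longrightarrow> Fo X \<in> cw_obj C'"
  unfolding cwf_morphism_def by (drule conjunct1) blast
lemma cm_hom: "cwf_morphism C C' Fo Fm sg th \<Longrightarrow> X \<in> cw_obj C \<Longrightarrow> Y \<in> cw_obj C \<Longrightarrow> f \<in> cw_hom C Y X
   \<Longrightarrow> Fm f \<in> cw_hom C' (Fo Y) (Fo X)"
  unfolding cwf_morphism_def by (drule conjunct2, drule conjunct1) blast
lemma cm_ty: "cwf_morphism C C' Fo Fm sg th \<Longrightarrow> X \<in> cw_obj C \<Longrightarrow> S \<in> cw_Ty C X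
   \<Longrightarrow> sg X S \<in> cw_Ty C' (Fo X)"
  unfolding cwf_morphism_def
  by (drule conjunct2, drule conjunct2, drule conjunct2, drule conjunct2, drule conjunct2, drule conjunct1) blast
lemma cm_ext: "cwf_morphism C C' Fo Fm sg th \<Longrightarrow> X \<in> cw_obj C \<Longrightarrow> S \<in> cw_Ty C X
   \<Longrightarrow> Fo (cw_ext C X S) = cw_ext C' (Fo X) (sg X S) \<and> Fm (cw_p C X S) = cw_p C' (Fo X) (sg X S)"
  unfolding cwf_morphism_def
  by (drule conjunct2, drule conjunct2, drule conjunct2, drule conjunct2, drule conjunct2, drule conjunct2,
      drule conjunct2, drule conjunct1) blast

lemma hd_prealg: "hyperdoctrine C H \<Longrightarrow> X \<in> cw_obj C \<Longrightarrow> heyting_prealg (hd_Pr H X)"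
  unfolding hyperdoctrine_def by (drule conjunct1) blast
lemma hd_subhom: "hyperdoctrine C H \<Longrightarrow> X \<in> cw_obj C \<Longrightarrow> Y \<in> cw_obj C \<Longrightarrow> f \<in> cw_hom C Y X
   \<Longrightarrow> heyting_hom (hd_Pr H X) (hd_Pr H Y) (\<lambda>R. hd_sub H R f)"
  unfolding hyperdoctrine_def by (drule conjunct2, drule conjunct1) blast
lemma hd_quant: "hyperdoctrine C H \<Longrightarrow> X \<in> cw_obj C \<Longrightarrow> S \<in> cw_Ty C X \<Longrightarrow>
       (\<forall>R\<in>hcar (hd_Pr H (cw_ext C X S)).
           hd_all H X S R \<in> hcar (hd_Pr H X) \<and> hd_ex H X S R \<in> hcar (hd_Pr H X)) \<and>
       (\<forall>Q\<in>hcar (hd_Pr H X). \<forall>R\<in>hcar (hd_Pr H (cw_ext C X S)).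
           (hle (hd_Pr H X) Q (hd_all H X S R) \<longleftrightarrow>
              hle (hd_Pr H (cw_ext C X S)) (hd_sub H Q (cw_p C X S)) R) \<and>
           (hle (hd_Pr H X) (hd_ex H X S R) Q \<longleftrightarrow>
              hle (hd_Pr H (cw_ext C X S)) R (hd_sub H Q (cw_p C X S))))"
  unfolding hyperdoctrine_def
  by (drule conjunct2, drule conjunct2, drule conjunct2, drule conjunct2, drule bspec, assumption,
      drule bspec, assumption) blast

lemma hm_hom: "hd_morphism C C' Fo Fm sg H H' G \<Longrightarrow> X \<in> cw_obj C \<Longrightarrow> heyting_hom (hd_Pr H X) (hd_Pr H' (Fo X)) (G X)"
  unfolding hd_morphism_def by (drule conjunct1) blast
lemma hm_sub: "hd_morphism C C' Fo Fm sg H H' G \<Longrightarrow> X \<in> cw_obj C \<Longrightarrow> Y \<in> cw_obj C \<Longrightarrow> f \<in> cw_hom C Y X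
  \<Longrightarrow> R \<in> hcar (hd_Pr H X) \<Longrightarrow> G Y (hd_sub H R f) = hd_sub H' (G X R) (Fm f)"
  unfolding hd_morphism_def by (drule conjunct2, drule conjunct1) blast
lemma hm_q: "hd_morphism C C' Fo Fm sg H H' G \<Longrightarrow> X \<in> cw_obj C \<Longrightarrow> S \<in> cw_Ty C X \<Longrightarrow>
   R \<in> hcar (hd_Pr H (cw_ext C X S)) \<Longrightarrow>
        G X (hd_all H X S R) = hd_all H' (Fo X) (sg X S) (G (cw_ext C X S) R) \<and>
        G X (hd_ex H X S R) = hd_ex H' (Fo X) (sg X S) (G (cw_ext C X S) R)"
  unfolding hd_morphism_def by (drule conjunct2, drule conjunct2) blast

lemma hh_car: "heyting_hom H H' h \<Longrightarrow> x \<in> hcar H \<Longrightarrow> h x \<in> hcar H'"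
  unfolding heyting_hom_def by (drule conjunct1) blast
lemma hh_mono: "heyting_hom H H' h \<Longrightarrow> x \<in> hcar H \<Longrightarrow> y \<in> hcar H \<Longrightarrow> hle H x y \<Longrightarrow> hle H' (h x) (h y)"
  unfolding heyting_hom_def by (drule conjunct2, drule conjunct1) blast
lemma hh_top: "heyting_hom H H' h \<Longrightarrow> h (htop H) = htop H'"
  unfolding heyting_hom_def by (drule conjunct2, drule conjunct2, drule conjunct1) blast
lemma hh_bot: "heyting_hom H H' h \<Longrightarrow> h (hbot H) = hbot H'"
  unfolding heyting_hom_def by (drule conjunct2, drule conjunct2, drule conjunct2, drule conjunct1) blast
lemma hh_ops: "heyting_hom H H' h \<Longrightarrow> x \<in> hcar H \<Longrightarrow> y \<in> hcar H \<Longrightarrow>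
        h (hmeet H x y) = hmeet H' (h x) (h y) \<and>
        h (hjoin H x y) = hjoin H' (h x) (h y) \<and>
        h (himp H x y) = himp H' (h x) (h y)"
  unfolding heyting_hom_def by (drule conjunct2, drule conjunct2, drule conjunct2, drule conjunct2) blast


theorem mainTheorem20:
  fixes phi :: "'v set \<Rightarrow> 'v set" and fr :: "'v set \<Rightarrow> 'v"
    and Sig :: "('v,'f,'s) decl set" and Pi :: "('v,'f,'s,'r) pdecl set"
    and C :: "('o,'m,'ty,'tm) cwf"
    and Fo :: "('v,'f,'s) ctx \<Rightarrow> 'o" and Fm :: "('v,'f,'s) smor \<Rightarrow> 'm"
    and sg :: "('v,'f,'s) ctx \<Rightarrow> ('v,'f,'s) sty \<Rightarrow> 'ty"
    and th :: "('v,'f,'s) ctx \<Rightarrow> ('v,'f,'s) sty \<Rightarrow> ('v,'f,'s) stm \<Rightarrow> 'tm"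
    and D :: "('o,'m,'ty,'a) hyperdoc"
    and G :: "('v,'f,'s) ctx \<Rightarrow> ('v,'f,'s) ctx \<times> ('v,'f,'s,'r) form \<Rightarrow> 'a"
    and T :: "('v,'f,'s,'r) seq set"
  assumes "var_system phi fr" and "de_bruijn phi fr"
    and "signature phi Sig" and "sig_standard Sig"
    and "cwf C"
    and "cwf_morphism (FSig phi fr Sig) C Fo Fm sg th"
    and "pred_signature phi Sig Pi" and "pred_standard Pi"
    and "hyperdoctrine C D"
    and "hd_morphism (FSig phi fr Sig) C Fo Fm sg (LT phi fr Sig Pi {}) D G"
    and "theory_over phi Sig Pi T"
    and "\<forall>(a, X, b)\<in>T. hle (hd_Pr D (Fo X)) (G X (X, a)) (G X (X, b))"
  shows "(\<forall>(a, X, b)\<in>thms phi fr Sig Pi T. hle (hd_Pr D (Fo X)) (G X (X, a)) (G X (X, b)))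
       \<and> hd_morphism (FSig phi fr Sig) C Fo Fm sg (LT phi fr Sig Pi T) D G"
proof -
  note vs = assms(1) and db = assms(2) and sig = assms(3) and cm = assms(6) and psig = assms(7)
    and hd = assms(9) and hm = assms(10) and thy = assms(11) and Tok = assms(12)
  let ?FS = "FSig phi fr Sig" and ?L0 = "LT phi fr Sig Pi {}"
  have obj: "X \<in> cw_obj ?FS" if "CtxJ X \<in> judg phi Sig" for X
    using that by (simp add: FSig_def)
  have hom: "(Y, X, as) \<in> cw_hom ?FS Y X" if "mor_judg (judg phi Sig) Y X as" for X Y as
    using that by (simp add: FSig_def)
  have FoX: "Fo X \<in> cw_obj C" if "CtxJ X \<in> judg phi Sig" for X
    using cm_obj[OF cm obj[OF that]] .
  have hp: "heyting_prealg (hd_Pr D (Fo X))" if "CtxJ X \<in> judg phi Sig" for X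
    using hd_prealg[OF hd FoX[OF that]] .
  have hh: "heyting_hom (hd_Pr ?L0 X) (hd_Pr D (Fo X)) (G X)" if "CtxJ X \<in> judg phi Sig" for X
    using hm_hom[OF hm obj[OF that]] .
  have carL: "(X, a) \<in> hcar (hd_Pr ?L0 X)" if "(a, X) \<in> forms phi Sig Pi" for X a
    using that by (simp add: LT_def)
  have mem: "G X (X, a) \<in> hcar (hd_Pr D (Fo X))" if "(a, X) \<in> forms phi Sig Pi" for X a
    using hh_car[OF hh[OF forms_ctx[OF that]] carL[OF that]] .
  have ops: "G X (X, FAnd a b) = hmeet (hd_Pr D (Fo X)) (G X (X, a)) (G X (X, b)) \<and>
             G X (X, FOr a b) = hjoin (hd_Pr D (Fo X)) (G X (X, a)) (G X (X, b)) \<and>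
             G X (X, FImp a b) = himp (hd_Pr D (Fo X)) (G X (X, a)) (G X (X, b))"
    if "(a, X) \<in> forms phi Sig Pi" "(b, X) \<in> forms phi Sig Pi" for X a b
    using hh_ops[OF hh[OF forms_ctx[OF that(1)]] carL[OF that(1)] carL[OF that(2)]]
    by (simp add: LT_def)
  have topG: "G X (X, FTop) = htop (hd_Pr D (Fo X))" if "CtxJ X \<in> judg phi Sig" for X
    using hh_top[OF hh[OF that]] by (simp add: LT_def)
  have botG: "G X (X, FBot) = hbot (hd_Pr D (Fo X))" if "CtxJ X \<in> judg phi Sig" for X
    using hh_bot[OF hh[OF that]] by (simp add: LT_def)
  have quant: "sg X (X, A) \<in> cw_Ty C (Fo X) \<and>
      Fo (X @ [(x, A)]) = cw_ext C (Fo X) (sg X (X, A)) \<and>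
      ((b, X @ [(x, A)]) \<in> forms phi Sig Pi \<longrightarrow>
         G X (X, FAll x A b) = hd_all D (Fo X) (sg X (X, A)) (G (X @ [(x, A)]) (X @ [(x, A)], b)) \<and>
         G X (X, FEx x A b) = hd_ex D (Fo X) (sg X (X, A)) (G (X @ [(x, A)]) (X @ [(x, A)], b))) \<and>
      ((a, X) \<in> forms phi Sig Pi \<longrightarrow>
         G (X @ [(x, A)]) (X @ [(x, A)], fweak fr a X x A) = hd_sub D (G X (X, a)) (cw_p C (Fo X) (sg X (X, A))))"
    if XA: "CtxJ (X @ [(x, A)]) \<in> judg phi Sig" for X x A a b
  proof -
    have X: "CtxJ X \<in> judg phi Sig" and A: "TypeJ A X \<in> judg phi Sig"
      using ctx_snoc_inv[OF XA] by auto
    have xf: "x = fresh fr X" by (rule ctx_fresh[OF db XA])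
    have S: "(X, A) \<in> cw_Ty ?FS X" using A by (simp add: FSig_def)
    have ext: "cw_ext ?FS X (X, A) = X @ [(x, A)]" using xf by (simp add: FSig_def)
    have pp: "cw_p ?FS X (X, A) = (X @ [(x, A)], X, map Var (ovars X))" using xf by (simp add: FSig_def)
    note ce = cm_ext[OF cm obj[OF X] S]
    show ?thesis
    proof (intro conjI HOL.impI)
      show "sg X (X, A) \<in> cw_Ty C (Fo X)" by (rule cm_ty[OF cm obj[OF X] S])
      show "Fo (X @ [(x, A)]) = cw_ext C (Fo X) (sg X (X, A))" using ce ext by simp
    next
      assume b: "(b, X @ [(x, A)]) \<in> forms phi Sig Pi"
      have R: "(X @ [(x, A)], b) \<in> hcar (hd_Pr ?L0 (cw_ext ?FS X (X, A)))"
        using b ext by (simp add: LT_def)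
      note q = hm_q[OF hm obj[OF X] S R]
      have "hd_all ?L0 X (X, A) (X @ [(x, A)], b) = (X, FAll x A b)"
        "hd_ex ?L0 X (X, A) (X @ [(x, A)], b) = (X, FEx x A b)"
        using xf by (simp_all add: LT_def)
      then show "G X (X, FAll x A b) = hd_all D (Fo X) (sg X (X, A)) (G (X @ [(x, A)]) (X @ [(x, A)], b))"
        "G X (X, FEx x A b) = hd_ex D (Fo X) (sg X (X, A)) (G (X @ [(x, A)]) (X @ [(x, A)], b))"
        using q ext by simp_all
    next
      assume a: "(a, X) \<in> forms phi Sig Pi"
      have f: "(X @ [(x, A)], X, map Var (ovars X)) \<in> cw_hom ?FS (X @ [(x, A)]) X"
        by (rule hom[OF mor_proj[OF XA]])
      have "G (X @ [(x, A)]) (hd_sub ?L0 (X, a) (X @ [(x, A)], X, map Var (ovars X)))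
          = hd_sub D (G X (X, a)) (Fm (X @ [(x, A)], X, map Var (ovars X)))"
        by (rule hm_sub[OF hm obj[OF X] obj[OF XA] f carL[OF a]])
      moreover have "hd_sub ?L0 (X, a) (X @ [(x, A)], X, map Var (ovars X)) = (X @ [(x, A)], fweak fr a X x A)"
        by (simp add: LT_def fweak_def)
      moreover have "Fm (X @ [(x, A)], X, map Var (ovars X)) = cw_p C (Fo X) (sg X (X, A))"
        using ce pp by simp
      ultimately show "G (X @ [(x, A)]) (X @ [(x, A)], fweak fr a X x A) = hd_sub D (G X (X, a)) (cw_p C (Fo X) (sg X (X, A)))"
        by simp
    qed
  qed
  have adj: "(hle (hd_Pr D (Fo X)) Q (hd_all D (Fo X) (sg X (X, A)) R) \<longleftrightarrow>
              hle (hd_Pr D (Fo (X @ [(x, A)]))) (hd_sub D Q (cw_p C (Fo X) (sg X (X, A)))) R) \<and>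
             (hle (hd_Pr D (Fo X)) (hd_ex D (Fo X) (sg X (X, A)) R) Q \<longleftrightarrow>
              hle (hd_Pr D (Fo (X @ [(x, A)]))) R (hd_sub D Q (cw_p C (Fo X) (sg X (X, A)))))"
    if XA: "CtxJ (X @ [(x, A)]) \<in> judg phi Sig" and Q: "Q \<in> hcar (hd_Pr D (Fo X))"
      and R: "R \<in> hcar (hd_Pr D (Fo (X @ [(x, A)])))" for X x A Q R
  proof -
    have X: "CtxJ X \<in> judg phi Sig" using ctx_snoc_inv[OF XA] by auto
    note qq = quant[OF XA, of undefined undefined]
    have R': "R \<in> hcar (hd_Pr D (cw_ext C (Fo X) (sg X (X, A))))" using R qq by simp
    note hq = hd_quant[OF hd FoX[OF X], of "sg X (X, A)"]
    show ?thesis using hq qq Q R' by simp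
  qed
  have subG: "G Y (Y, fsub fr a Y X as) = hd_sub D (G X (X, a)) (Fm (Y, X, as)) \<and>
      heyting_hom (hd_Pr D (Fo X)) (hd_Pr D (Fo Y)) (\<lambda>R. hd_sub D R (Fm (Y, X, as)))"
    if m: "mor_judg (judg phi Sig) Y X as" and a: "(a, X) \<in> forms phi Sig Pi" for X Y a as
  proof -
    have X: "CtxJ X \<in> judg phi Sig" and Y: "CtxJ Y \<in> judg phi Sig" using m by (auto simp: mor_judg_def)
    have "G Y (hd_sub ?L0 (X, a) (Y, X, as)) = hd_sub D (G X (X, a)) (Fm (Y, X, as))"
      by (rule hm_sub[OF hm obj[OF X] obj[OF Y] hom[OF m] carL[OF a]])
    moreover have "hd_sub ?L0 (X, a) (Y, X, as) = (Y, fsub fr a Y X as)" by (simp add: LT_def)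
    moreover have "heyting_hom (hd_Pr D (Fo X)) (hd_Pr D (Fo Y)) (\<lambda>R. hd_sub D R (Fm (Y, X, as)))"
      by (rule hd_subhom[OF hd FoX[OF X] FoX[OF Y] cm_hom[OF cm obj[OF X] obj[OF Y] hom[OF m]]])
    ultimately show ?thesis by simp
  qed
  have main: "(a, X) \<in> forms phi Sig Pi \<and> (b, X) \<in> forms phi Sig Pi \<and>
      hle (hd_Pr D (Fo X)) (G X (X, a)) (G X (X, b))"
    if "(a, X, b) \<in> thms phi fr Sig Pi T" for a X b
    using that
  proof (induction rule: thms.induct[split_format (complete)])
    case (ax a Y b)
    then show ?case using thy Tok unfolding theory_over_def by fast
  next
    case (refl a Y)
    then show ?case using hp_refl[OF hp[OF forms_ctx[OF refl]] mem[OF refl]] by simp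
  next
    case (cut a Y c b)
    then show ?case using hp_trans[OF hp[OF forms_ctx[of a Y]] mem mem mem] by blast
  next
    case (andE1 c b Y)
    note f = forms_inv(1)[OF andE1]
    show ?case using andE1 f ops[of c Y b] hp_meet_le[OF hp[OF forms_ctx[OF andE1]] mem mem] by simp
  next
    case (andE2 c b Y)
    note f = forms_inv(1)[OF andE2]
    show ?case using andE2 f ops[of c Y b] hp_meet_le[OF hp[OF forms_ctx[OF andE2]] mem mem] by simp
  next
    case (andI a Y c b)
    then have fa: "(a, Y) \<in> forms phi Sig Pi" and fc: "(c, Y) \<in> forms phi Sig Pi"
      and fb: "(b, Y) \<in> forms phi Sig Pi" by auto
    show ?case using andI ops[OF fc fb] hp_meet[OF hp[OF forms_ctx[OF fa]] mem[OF fc] mem[OF fb] mem[OF fa]]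
      by (simp add: forms.conj)
  next
    case (topI a Y)
    then show ?case using topG[OF forms_ctx[OF topI(1)]] hp_top[OF hp[OF forms_ctx[OF topI(1)]] mem[OF topI(1)]]
      by simp
  next
    case (orI1 c b Y)
    note f = forms_inv(2)[OF orI1]
    show ?case using orI1 f ops[of c Y b] hp_join_le[OF hp[OF forms_ctx[OF orI1]] mem mem] by simp
  next
    case (orI2 c b Y)
    note f = forms_inv(2)[OF orI2]
    show ?case using orI2 f ops[of c Y b] hp_join_le[OF hp[OF forms_ctx[OF orI2]] mem mem] by simp
  next
    case (orE c Y a b)
    then have fa: "(a, Y) \<in> forms phi Sig Pi" and fc: "(c, Y) \<in> forms phi Sig Pi"
      and fb: "(b, Y) \<in> forms phi Sig Pi" by auto
    show ?case using orE ops[OF fc fb] hp_join[OF hp[OF forms_ctx[OF fa]] mem[OF fc] mem[OF fb] mem[OF fa]]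
      by (simp add: forms.disj)
  next
    case (botE a Y)
    then show ?case using botG[OF forms_ctx[OF botE(1)]] hp_bot[OF hp[OF forms_ctx[OF botE(1)]] mem[OF botE(1)]]
      by simp
  next
    case (impI c b Y a)
    then have fa: "(a, Y) \<in> forms phi Sig Pi" and fc: "(c, Y) \<in> forms phi Sig Pi"
      and fb: "(b, Y) \<in> forms phi Sig Pi" using forms_inv(1) by blast+
    show ?case using impI fa fb fc ops[OF fc fb] ops[OF fb fa]
        hp_imp[OF hp[OF forms_ctx[OF fa]] mem[OF fb] mem[OF fa] mem[OF fc]]
      by (simp add: forms.imp)
  next
    case (impE c Y b a)
    then have fa: "(a, Y) \<in> forms phi Sig Pi" and fc: "(c, Y) \<in> forms phi Sig Pi"
      and fb: "(b, Y) \<in> forms phi Sig Pi" using forms_inv(3) by blast+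
    show ?case using impE fa fb fc ops[OF fc fb] ops[OF fb fa]
        hp_imp[OF hp[OF forms_ctx[OF fa]] mem[OF fb] mem[OF fa] mem[OF fc]]
      by (simp add: forms.conj)
  next
    case (allI a Y x A b)
    have fb: "(b, Y @ [(x, A)]) \<in> forms phi Sig Pi" using allI by blast
    have XA: "CtxJ (Y @ [(x, A)]) \<in> judg phi Sig" using forms_ctx[OF fb] .
    note q = quant[OF XA, of b a]
    note ad = adj[OF XA mem[OF \<open>(a, Y) \<in> forms phi Sig Pi\<close>] mem[OF fb]]
    show ?case using allI q ad fb by simp
  next
    case (allE a Y x A b)
    have fa: "(a, Y) \<in> forms phi Sig Pi" using allE by blast
    have "(FAll x A b, Y) \<in> forms phi Sig Pi" using allE by auto
    note ff = forms_inv(4)[OF this]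
    then have fb: "(b, Y @ [(x, A)]) \<in> forms phi Sig Pi" by auto
    have XA: "CtxJ (Y @ [(x, A)]) \<in> judg phi Sig" using forms_ctx[OF fb] .
    have fw: "(fweak fr a Y x A, Y @ [(x, A)]) \<in> forms phi Sig Pi"
      unfolding fweak_def by (rule forms_fsub[OF vs sig psig fa mor_proj[OF XA]])
    note q = quant[OF XA, of b a]
    note ad = adj[OF XA mem[OF fa] mem[OF fb]]
    show ?case using allE q ad fb fa fw by simp
  next
    case (exE b Y x A a)
    have fb: "(b, Y @ [(x, A)]) \<in> forms phi Sig Pi" using exE by blast
    have XA: "CtxJ (Y @ [(x, A)]) \<in> judg phi Sig" using forms_ctx[OF fb] .
    note q = quant[OF XA, of b a]
    note ad = adj[OF XA mem[OF \<open>(a, Y) \<in> forms phi Sig Pi\<close>] mem[OF fb]]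
    show ?case using exE q ad fb by simp
  next
    case (exI x A b Y a)
    have fa: "(a, Y) \<in> forms phi Sig Pi" using exI by blast
    have "(FEx x A b, Y) \<in> forms phi Sig Pi" using exI by auto
    note ff = forms_inv(5)[OF this]
    then have fb: "(b, Y @ [(x, A)]) \<in> forms phi Sig Pi" by auto
    have XA: "CtxJ (Y @ [(x, A)]) \<in> judg phi Sig" using forms_ctx[OF fb] .
    have fw: "(fweak fr a Y x A, Y @ [(x, A)]) \<in> forms phi Sig Pi"
      unfolding fweak_def by (rule forms_fsub[OF vs sig psig fa mor_proj[OF XA]])
    note q = quant[OF XA, of b a]
    note ad = adj[OF XA mem[OF fa] mem[OF fb]]
    show ?case using exI q ad fb fa fw by simp
  next
    case (subst a Y b Y' as)
    then have fa: "(a, Y) \<in> forms phi Sig Pi" and fb: "(b, Y) \<in> forms phi Sig Pi"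
      and le: "hle (hd_Pr D (Fo Y)) (G Y (Y, a)) (G Y (Y, b))" by auto
    note sa = subG[OF \<open>mor_judg (judg phi Sig) Y' Y as\<close> fa] and sb = subG[OF \<open>mor_judg (judg phi Sig) Y' Y as\<close> fb]
    have "hle (hd_Pr D (Fo Y')) (hd_sub D (G Y (Y, a)) (Fm (Y', Y, as))) (hd_sub D (G Y (Y, b)) (Fm (Y', Y, as)))"
      using hh_mono[OF conjunct2[OF sa] mem[OF fa] mem[OF fb] le] by simp
    then show ?case using sa sb forms_fsub[OF vs sig psig fa \<open>mor_judg (judg phi Sig) Y' Y as\<close>] forms_fsub[OF vs sig psig fb \<open>mor_judg (judg phi Sig) Y' Y as\<close>]
      by simp
  qed
  have part1: "\<forall>(a, X, b)\<in>thms phi fr Sig Pi T. hle (hd_Pr D (Fo X)) (G X (X, a)) (G X (X, b))"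
    using main by blast
  let ?LT = "LT phi fr Sig Pi T"
  have eqs: "hd_sub ?LT = hd_sub ?L0" "hd_all ?LT = hd_all ?L0" "hd_ex ?LT = hd_ex ?L0"
    "\<And>X. hcar (hd_Pr ?LT X) = hcar (hd_Pr ?L0 X)"
    by (simp_all add: LT_def)
  have prX: "hd_Pr ?LT X = (hd_Pr ?L0 X)\<lparr>hle := (\<lambda>(G1, a) (G2, b). (a, G1, b) \<in> thms phi fr Sig Pi T)\<rparr>" for X
    by (simp add: LT_def)
  have hhT: "heyting_hom (hd_Pr ?LT X) (hd_Pr D (Fo X)) (G X)" if X: "X \<in> cw_obj ?FS" for X
  proof -
    have XJ: "CtxJ X \<in> judg phi Sig" using X by (simp add: FSig_def)
    note h0 = hh[OF XJ]
    have mono: "\<forall>x\<in>hcar (hd_Pr ?L0 X). \<forall>y\<in>hcar (hd_Pr ?L0 X).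
        (\<lambda>(G1, a) (G2, b). (a, G1, b) \<in> thms phi fr Sig Pi T) x y \<longrightarrow> hle (hd_Pr D (Fo X)) (G X x) (G X y)"
      using part1 by (auto simp: LT_def)
    show ?thesis unfolding prX using h0 mono unfolding heyting_hom_def by simp
  qed
  have part2: "hd_morphism ?FS C Fo Fm sg ?LT D G"
    unfolding hd_morphism_def eqs
  proof (intro conjI ballI)
    fix X assume "X \<in> cw_obj ?FS"
    then show "heyting_hom (hd_Pr ?LT X) (hd_Pr D (Fo X)) (G X)" by (rule hhT)
  next
    fix X Y f R assume "X \<in> cw_obj ?FS" "Y \<in> cw_obj ?FS" "f \<in> cw_hom ?FS Y X" "R \<in> hcar (hd_Pr ?L0 X)"
    then show "G Y (hd_sub ?L0 R f) = hd_sub D (G X R) (Fm f)" by (rule hm_sub[OF hm])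
  next
    fix X S R assume "X \<in> cw_obj ?FS" "S \<in> cw_Ty ?FS X" "R \<in> hcar (hd_Pr ?L0 (cw_ext ?FS X S))"
    note q = hm_q[OF hm this]
    show "G X (hd_all ?L0 X S R) = hd_all D (Fo X) (sg X S) (G (cw_ext ?FS X S) R)" using q by simp
    show "G X (hd_ex ?L0 X S R) = hd_ex D (Fo X) (sg X S) (G (cw_ext ?FS X S) R)" using q by simp
  qed
  show ?thesis using part1 part2 by simp
qed


end
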